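(* Let $G$ be a simple nonplanar cubic graph with $n$ vertices. Then there is an infinite family of nonplanar cubic graphs $G_k$ ($k\ge 1$) such that $G_k$ has $6k+n$ vertices and $K'(G_k,3)=2^kK'(G,3)$. Moreover, if $G$ is bipartite, the graphs $G_k$ can be chosen bipartite.
   Context: Graphs are finite; multiple edges allowed, loops not. A proper $3$-edge coloring assigns colors from $\{1,2,3\}$ to edges so that adjacent edges receive different colors. For colors $a\neq b$, an edge-Kempe chain is a connected component of the subgraph of edges colored $a$ or $b$; an edge-Kempe switch interchanges $a$ and $b$ on one chain. $K'(G,3)$ is the number of equivalence classes of proper $3$-edge colorings of $G$ under the equivalence relation generated by edge-Kempe switches. *)

theory Defs
  imports "HOL-Analysis.Analysis"
begin

text \<open>A finite multigraph without loops: vertex set V, edge set E (edge identifiers,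
so parallel edges are allowed), and an endpoint map assigning to each edge a set of
exactly two distinct vertices.\<close>

definition graph :: "'v set \<Rightarrow> 'e set \<Rightarrow> ('e \<Rightarrow> 'v set) \<Rightarrow> bool" where
  "graph V E ends \<longleftrightarrow> finite V \<and> finite E \<and> (\<forall>e\<in>E. ends e \<subseteq> V \<and> card (ends e) = 2)"

definition simple_graph :: "'v set \<Rightarrow> 'e set \<Rightarrow> ('e \<Rightarrow> 'v set) \<Rightarrow> bool" where
  "simple_graph V E ends \<longleftrightarrow> graph V E ends \<and> inj_on ends E"

definition degree :: "'e set \<Rightarrow> ('e \<Rightarrow> 'v set) \<Rightarrow> 'v \<Rightarrow> nat" where
  "degree E ends v = card {e\<in>E. v \<in> ends e}"

definition cubic :: "'v set \<Rightarrow> 'e set \<Rightarrow> ('e \<Rightarrow> 'v set) \<Rightarrow> bool" where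
  "cubic V E ends \<longleftrightarrow> (\<forall>v\<in>V. degree E ends v = 3)"

definition bipartite :: "'v set \<Rightarrow> 'e set \<Rightarrow> ('e \<Rightarrow> 'v set) \<Rightarrow> bool" where
  "bipartite V E ends \<longleftrightarrow> (\<exists>A\<subseteq>V. \<forall>e\<in>E. card (ends e \<inter> A) = 1)"

definition planar :: "'v set \<Rightarrow> 'e set \<Rightarrow> ('e \<Rightarrow> 'v set) \<Rightarrow> bool" where
  "planar V E ends \<longleftrightarrow>
     (\<exists>(f :: 'v \<Rightarrow> complex) (\<gamma> :: 'e \<Rightarrow> real \<Rightarrow> complex).
        inj_on f V \<and>
        (\<forall>e\<in>E. arc (\<gamma> e) \<and> {pathstart (\<gamma> e), pathfinish (\<gamma> e)} = f ` ends e \<and>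
                path_image (\<gamma> e) \<inter> f ` V \<subseteq> f ` ends e) \<and>
        (\<forall>e\<in>E. \<forall>e'\<in>E. e \<noteq> e' \<longrightarrow>
                path_image (\<gamma> e) \<inter> path_image (\<gamma> e') \<subseteq> f ` (ends e \<inter> ends e')))"

definition proper_3_edge_colorings :: "'e set \<Rightarrow> ('e \<Rightarrow> 'v set) \<Rightarrow> ('e \<Rightarrow> nat) set" where
  "proper_3_edge_colorings E ends =
     {c \<in> E \<rightarrow>\<^sub>E {1,2,3}. \<forall>e\<in>E. \<forall>e'\<in>E. e \<noteq> e' \<and> ends e \<inter> ends e' \<noteq> {} \<longrightarrow> c e \<noteq> c e'}"

definition kempe_adj :: "'e set \<Rightarrow> ('e \<Rightarrow> 'v set) \<Rightarrow> ('e \<Rightarrow> nat) \<Rightarrow> nat \<Rightarrow> nat \<Rightarrow> ('e \<times> 'e) set" where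
  "kempe_adj E ends c a b =
     {(e, e'). e \<in> E \<and> e' \<in> E \<and> c e \<in> {a, b} \<and> c e' \<in> {a, b} \<and> ends e \<inter> ends e' \<noteq> {}}"

definition kempe_chain :: "'e set \<Rightarrow> ('e \<Rightarrow> 'v set) \<Rightarrow> ('e \<Rightarrow> nat) \<Rightarrow> nat \<Rightarrow> nat \<Rightarrow> 'e set \<Rightarrow> bool" where
  "kempe_chain E ends c a b K \<longleftrightarrow>
     (\<exists>e\<in>E. c e \<in> {a, b} \<and> K = {e'. (e, e') \<in> (kempe_adj E ends c a b)\<^sup>*})"

definition kempe_switch :: "'e set \<Rightarrow> ('e \<Rightarrow> 'v set) \<Rightarrow> ('e \<Rightarrow> nat) \<Rightarrow> ('e \<Rightarrow> nat) \<Rightarrow> bool" where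
  "kempe_switch E ends c c' \<longleftrightarrow>
     (\<exists>a b K. a \<in> {1,2,3} \<and> b \<in> {1,2,3} \<and> a \<noteq> b \<and> kempe_chain E ends c a b K \<and>
        c' = (\<lambda>e. if e \<in> K then (if c e = a then b else a) else c e))"

text \<open>Equivalence generated by edge-Kempe switches (switches preserve properness and are
self-inverse, so the reflexive-transitive closure from proper colourings suffices).\<close>

definition kempe_equiv :: "'e set \<Rightarrow> ('e \<Rightarrow> 'v set) \<Rightarrow> (('e \<Rightarrow> nat) \<times> ('e \<Rightarrow> nat)) set" where
  "kempe_equiv E ends =
     {(c, c'). c \<in> proper_3_edge_colorings E ends \<and> kempe_switch E ends c c'}\<^sup>*"

definition kempe_classes_3 :: "'e set \<Rightarrow> ('e \<Rightarrow> 'v set) \<Rightarrow> nat" where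
  "kempe_classes_3 E ends = card (proper_3_edge_colorings E ends // kempe_equiv E ends)"

end

theory Submission
  imports Defs
begin


lemma classes_transport:
  assumes bij: "bij_betw F P1 P2" and S1: "S1 \<subseteq> P1 \<times> P1" and S2: "S2 \<subseteq> P2 \<times> P2"
    and iff: "\<And>x y. x \<in> P1 \<Longrightarrow> y \<in> P1 \<Longrightarrow> (x,y) \<in> S1 \<longleftrightarrow> (F x, F y) \<in> S2"
  shows "card (P1 // S1\<^sup>*) = card (P2 // S2\<^sup>*)"
proof -
  have inP1: "y \<in> P1" if "(x,y) \<in> S1\<^sup>*" "x \<in> P1" for x y
    using that by (induction rule: rtrancl_induct) (use S1 in auto)
  have inP2: "y \<in> P2" if "(x,y) \<in> S2\<^sup>*" "x \<in> P2" for x y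
    using that by (induction rule: rtrancl_induct) (use S2 in auto)
  have fw: "(F x, F y) \<in> S2\<^sup>*" if "(x,y) \<in> S1\<^sup>*" "x \<in> P1" for x y
    using that
  proof (induction rule: rtrancl_induct)
    case base then show ?case by simp
  next
    case (step y z)
    then have "y \<in> P1" "z \<in> P1" using S1 by auto
    with step iff have "(F y, F z) \<in> S2" by blast
    with step show ?case by (meson rtrancl_into_rtrancl)
  qed
  have bw: "\<exists>y. (x,y) \<in> S1\<^sup>* \<and> w = F y" if "(F x, w) \<in> S2\<^sup>*" "x \<in> P1" for x w
    using that
  proof (induction rule: rtrancl_induct)
    case base then show ?case by blast
  next
    case (step w w')
    then obtain y where y: "(x,y) \<in> S1\<^sup>*" "w = F y" by blast
    have yP: "y \<in> P1" using inP1 y step by blast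
    have "w' \<in> P2" using step S2 by auto
    then obtain z where z: "z \<in> P1" "w' = F z" using bij by (metis bij_betw_iff_bijections)
    have "(y,z) \<in> S1" using iff[OF yP z(1)] step y z by simp
    then have "(x,z) \<in> S1\<^sup>*" using y by (meson rtrancl_into_rtrancl)
    then show ?case using z by blast
  qed
  have cls: "S2\<^sup>* `` {F x} = F ` (S1\<^sup>* `` {x})" if "x \<in> P1" for x
  proof
    show "S2\<^sup>* `` {F x} \<subseteq> F ` (S1\<^sup>* `` {x})"
    proof
      fix w assume "w \<in> S2\<^sup>* `` {F x}"
      then have "(F x, w) \<in> S2\<^sup>*" by simp
      from bw[OF this that] obtain y where "(x,y) \<in> S1\<^sup>*" "w = F y" by blast
      then show "w \<in> F ` (S1\<^sup>* `` {x})" by blast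
    qed
    show "F ` (S1\<^sup>* `` {x}) \<subseteq> S2\<^sup>* `` {F x}"
    proof
      fix w assume "w \<in> F ` (S1\<^sup>* `` {x})"
      then obtain y where "(x,y) \<in> S1\<^sup>*" "w = F y" by blast
      have "(F x, F y) \<in> S2\<^sup>*" using fw[of x y] that \<open>(x,y) \<in> S1\<^sup>*\<close> by blast
      then show "w \<in> S2\<^sup>* `` {F x}" using \<open>w = F y\<close> by simp
    qed
  qed
  have "P2 // S2\<^sup>* = (\<lambda>X. F ` X) ` (P1 // S1\<^sup>*)"
  proof -
    have "P2 = F ` P1" using bij by (simp add: bij_betw_def)
    then show ?thesis unfolding quotient_def using cls by auto
  qed
  moreover have "inj_on (\<lambda>X. F ` X) (P1 // S1\<^sup>*)"
  proof (rule inj_on_subset[OF inj_on_image_Pow])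
    show "inj_on F P1" using bij by (simp add: bij_betw_def)
    show "P1 // S1\<^sup>* \<subseteq> Pow P1" unfolding quotient_def using inP1 by auto
  qed
  ultimately show ?thesis by (simp add: card_image)
qed

lemma classes_product:
  assumes S1: "S1 \<subseteq> P1 \<times> P1" and S2: "S2 \<subseteq> P2 \<times> P2"
  defines "S \<equiv> {((x,y),(x',y)) | x x' y. (x,x') \<in> S1 \<and> y \<in> P2} \<union>
                 {((x,y),(x,y')) | x y y'. x \<in> P1 \<and> (y,y') \<in> S2}"
  shows "card ((P1 \<times> P2) // S\<^sup>*) = card (P1 // S1\<^sup>*) * card (P2 // S2\<^sup>*)"
proof -
  have inP1: "y \<in> P1" if "(x,y) \<in> S1\<^sup>*" "x \<in> P1" for x y
    using that by (induction rule: rtrancl_induct) (use S1 in auto)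
  have sub: "(x,u) \<in> S1\<^sup>* \<and> (y,v) \<in> S2\<^sup>*" if "((x,y),(u,v)) \<in> S\<^sup>*" for x y u v
    using that
  proof (induction "(u,v)" arbitrary: u v rule: rtrancl_induct)
    case base then show ?case by simp
  next
    case (step z u v)
    obtain u0 v0 where z: "z = (u0,v0)" by (cases z)
    with step have ih: "(x,u0) \<in> S1\<^sup>*" "(y,v0) \<in> S2\<^sup>*" by auto
    from step(2) z have "((u0,v0),(u,v)) \<in> S" by simp
    then have "((u0,u) \<in> S1 \<and> v = v0) \<or> (u = u0 \<and> (v0,v) \<in> S2)" unfolding S_def by auto
    then show ?case using ih by (meson rtrancl.rtrancl_into_rtrancl)
  qed
  have a1: "((x,y),(u,y)) \<in> S\<^sup>*" if "(x,u) \<in> S1\<^sup>*" "y \<in> P2" for x y u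
    using that(1)
  proof (induction rule: rtrancl_induct)
    case base then show ?case by simp
  next
    case (step u u')
    then have "((u,y),(u',y)) \<in> S" unfolding S_def using that(2) by auto
    then show ?case using step by (meson rtrancl.rtrancl_into_rtrancl)
  qed
  have a2: "((u,y),(u,v)) \<in> S\<^sup>*" if "(y,v) \<in> S2\<^sup>*" "u \<in> P1" for u y v
    using that(1)
  proof (induction rule: rtrancl_induct)
    case base then show ?case by simp
  next
    case (step v v')
    then have "((u,v),(u,v')) \<in> S" unfolding S_def using that(2) by auto
    then show ?case using step by (meson rtrancl.rtrancl_into_rtrancl)
  qed
  have cls: "S\<^sup>* `` {(x,y)} = S1\<^sup>* `` {x} \<times> S2\<^sup>* `` {y}" if "x \<in> P1" "y \<in> P2" for x y
  proof
    show "S\<^sup>* `` {(x,y)} \<subseteq> S1\<^sup>* `` {x} \<times> S2\<^sup>* `` {y}" using sub by auto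
    show "S1\<^sup>* `` {x} \<times> S2\<^sup>* `` {y} \<subseteq> S\<^sup>* `` {(x,y)}"
    proof clarify
      fix u v assume "(x,u) \<in> S1\<^sup>*" "(y,v) \<in> S2\<^sup>*"
      then have "((x,y),(u,y)) \<in> S\<^sup>*" "((u,y),(u,v)) \<in> S\<^sup>*"
        using a1 a2 inP1 that by auto
      then show "((x,y),(u,v)) \<in> S\<^sup>*" by (meson rtrancl_trans)
    qed
  qed
  have eq: "(P1 \<times> P2) // S\<^sup>* = (\<lambda>(X,Y). X \<times> Y) ` ((P1 // S1\<^sup>*) \<times> (P2 // S2\<^sup>*))"
  proof
    show "(P1 \<times> P2) // S\<^sup>* \<subseteq> (\<lambda>(X,Y). X \<times> Y) ` ((P1 // S1\<^sup>*) \<times> (P2 // S2\<^sup>*))"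
    proof
      fix Z assume "Z \<in> (P1 \<times> P2) // S\<^sup>*"
      then obtain x y where xy: "x \<in> P1" "y \<in> P2" "Z = S\<^sup>* `` {(x,y)}" unfolding quotient_def by auto
      then have "Z = (\<lambda>(X,Y). X \<times> Y) (S1\<^sup>* `` {x}, S2\<^sup>* `` {y})" using cls by simp
      moreover have "(S1\<^sup>* `` {x}, S2\<^sup>* `` {y}) \<in> (P1 // S1\<^sup>*) \<times> (P2 // S2\<^sup>*)"
        using xy by (auto intro: quotientI)
      ultimately show "Z \<in> (\<lambda>(X,Y). X \<times> Y) ` ((P1 // S1\<^sup>*) \<times> (P2 // S2\<^sup>*))" by blast
    qed
    show "(\<lambda>(X,Y). X \<times> Y) ` ((P1 // S1\<^sup>*) \<times> (P2 // S2\<^sup>*)) \<subseteq> (P1 \<times> P2) // S\<^sup>*"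
    proof clarify
      fix X Y assume "X \<in> P1 // S1\<^sup>*" "Y \<in> P2 // S2\<^sup>*"
      then obtain x y where xy: "x \<in> P1" "y \<in> P2" "X = S1\<^sup>* `` {x}" "Y = S2\<^sup>* `` {y}"
        unfolding quotient_def by auto
      then have "X \<times> Y = S\<^sup>* `` {(x,y)}" using cls by simp
      then show "X \<times> Y \<in> (P1 \<times> P2) // S\<^sup>*" using xy by (auto intro: quotientI)
    qed
  qed
  have inj: "inj_on (\<lambda>(X,Y). X \<times> Y) ((P1 // S1\<^sup>*) \<times> (P2 // S2\<^sup>*))"
  proof (rule inj_onI, clarify)
    fix X Y X' Y'
    assume "X \<in> P1 // S1\<^sup>*" "Y \<in> P2 // S2\<^sup>*" "X' \<in> P1 // S1\<^sup>*" "Y' \<in> P2 // S2\<^sup>*"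
      "X \<times> Y = X' \<times> Y'"
    moreover have "Z \<noteq> {}" if "Z \<in> A // R\<^sup>*" for Z and A :: "'z set" and R
      using that unfolding quotient_def by auto
    ultimately show "X = X' \<and> Y = Y'" by (metis times_eq_iff)
  qed
  show ?thesis unfolding eq using inj by (simp add: card_image card_cartesian_product)
qed



definition chain_from where
  "chain_from E ends c a b e = {e'. (e,e') \<in> (kempe_adj E ends c a b)\<^sup>*}"
definition swapK :: "('e \<Rightarrow> nat) \<Rightarrow> nat \<Rightarrow> nat \<Rightarrow> 'e set \<Rightarrow> 'e \<Rightarrow> nat" where
  "swapK c a b K = (\<lambda>e. if e \<in> K then (if c e = a then b else a) else c e)"
definition kstep where
  "kstep E ends = {(c,c'). c \<in> proper_3_edge_colorings E ends \<and> kempe_switch E ends c c'}"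

lemma kempe_equiv_kstep: "kempe_equiv E ends = (kstep E ends)\<^sup>*"
  unfolding kempe_equiv_def kstep_def by simp

lemma kempe_switch_alt:
  "kempe_switch E ends c d \<longleftrightarrow> (\<exists>a b e. a \<in> {1,2,3} \<and> b \<in> {1,2,3} \<and> a \<noteq> b \<and> e \<in> E \<and> c e \<in> {a,b}
      \<and> d = swapK c a b (chain_from E ends c a b e))"
  unfolding kempe_switch_def kempe_chain_def chain_from_def swapK_def by blast

lemma proper_iff:
  "c \<in> proper_3_edge_colorings E ends \<longleftrightarrow> c \<in> E \<rightarrow>\<^sub>E {1,2,3} \<and>
     (\<forall>e\<in>E. \<forall>e'\<in>E. e \<noteq> e' \<and> ends e \<inter> ends e' \<noteq> {} \<longrightarrow> c e \<noteq> c e')"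
  unfolding proper_3_edge_colorings_def by simp

lemma chain_sub:
  assumes "e \<in> E" "c e \<in> {a,b}" "y \<in> chain_from E ends c a b e"
  shows "y \<in> E \<and> c y \<in> {a,b}"
proof -
  have "(e,y) \<in> (kempe_adj E ends c a b)\<^sup>*" using assms(3) unfolding chain_from_def by simp
  then show ?thesis using assms(1,2)
    by (induction rule: rtrancl_induct) (auto simp: kempe_adj_def)
qed

lemma chain_sub_E:
  assumes "e \<in> E" "y \<in> chain_from E ends c a b e"
  shows "y \<in> E"
proof -
  have "(e,y) \<in> (kempe_adj E ends c a b)\<^sup>*" using assms(2) unfolding chain_from_def by simp
  then show ?thesis using assms(1)
    by (induction rule: rtrancl_induct) (auto simp: kempe_adj_def)
qed

lemma chain_closed:
  assumes "y \<in> chain_from E ends c a b e" "y \<in> E" "c y \<in> {a,b}" "z \<in> E" "c z \<in> {a,b}"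
    "ends y \<inter> ends z \<noteq> {}"
  shows "z \<in> chain_from E ends c a b e"
proof -
  have "(y,z) \<in> kempe_adj E ends c a b" using assms unfolding kempe_adj_def by auto
  then show ?thesis using assms(1) unfolding chain_from_def by (auto intro: rtrancl_into_rtrancl)
qed

lemma chain_start: "e \<in> chain_from E ends c a b e"
  unfolding chain_from_def by simp

lemma switch_proper:
  assumes c: "c \<in> proper_3_edge_colorings E ends" and e: "e \<in> E" "c e \<in> {a,b}"
    and ab: "a \<in> {1,2,3}" "b \<in> {1,2,3}" "a \<noteq> b"
  shows "swapK c a b (chain_from E ends c a b e) \<in> proper_3_edge_colorings E ends"
proof -
  let ?K = "chain_from E ends c a b e"
  have cp: "c \<in> E \<rightarrow>\<^sub>E {1,2,3}" and cpr: "\<And>x y. x \<in> E \<Longrightarrow> y \<in> E \<Longrightarrow> x \<noteq> y \<Longrightarrow> ends x \<inter> ends y \<noteq> {} \<Longrightarrow> c x \<noteq> c y"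
    using c unfolding proper_iff by auto
  have Ksub: "\<And>y. y \<in> ?K \<Longrightarrow> y \<in> E \<and> c y \<in> {a,b}" using chain_sub[of e E c a b] e by blast
  show ?thesis unfolding proper_iff
  proof (intro conjI ballI impI)
    show "swapK c a b ?K \<in> E \<rightarrow>\<^sub>E {1,2,3}"
      using cp Ksub ab unfolding swapK_def by (auto simp: PiE_iff extensional_def)
  next
    fix x y assume xy: "x \<in> E" "y \<in> E" "x \<noteq> y \<and> ends x \<inter> ends y \<noteq> {}"
    have ne: "c x \<noteq> c y" using cpr xy by blast
    show "swapK c a b ?K x \<noteq> swapK c a b ?K y"
    proof (cases "x \<in> ?K"; cases "y \<in> ?K")
      assume "x \<in> ?K" "y \<in> ?K"
      then have "c x \<in> {a,b}" "c y \<in> {a,b}" using Ksub by auto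
      then show ?thesis using \<open>x \<in> ?K\<close> \<open>y \<in> ?K\<close> ne ab(3) unfolding swapK_def by auto
    next
      assume x: "x \<in> ?K" and y: "y \<notin> ?K"
      have "c y \<notin> {a,b}"
        using chain_closed[of x E ends c a b e y] x y xy Ksub[OF x] by blast
      then show ?thesis using x y unfolding swapK_def by auto
    next
      assume x: "x \<notin> ?K" and y: "y \<in> ?K"
      have "c x \<notin> {a,b}"
        using chain_closed[of y E ends c a b e x] x y xy Ksub[OF y] by blast
      then show ?thesis using x y unfolding swapK_def by auto
    next
      assume "x \<notin> ?K" "y \<notin> ?K"
      then show ?thesis using ne unfolding swapK_def by auto
    qed
  qed
qed

lemma kstep_sub: "kstep E ends \<subseteq> proper_3_edge_colorings E ends \<times> proper_3_edge_colorings E ends"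
  unfolding kstep_def using switch_proper by (fastforce simp: kempe_switch_alt)

lemma kempe_adj_cong: "(\<And>x. x \<in> E \<Longrightarrow> c x = c' x) \<Longrightarrow> kempe_adj E ends c a b = kempe_adj E ends c' a b"
  unfolding kempe_adj_def by auto

lemma chain_from_cong: "(\<And>x. x \<in> E \<Longrightarrow> c x = c' x) \<Longrightarrow> chain_from E ends c a b e = chain_from E ends c' a b e"
  unfolding chain_from_def using kempe_adj_cong by metis

definition part where
  "part \<psi> E1 ends1 E ends \<longleftrightarrow> inj_on \<psi> E1 \<and> \<psi> ` E1 \<subseteq> E \<and>
     (\<forall>e\<in>E1. \<forall>e'\<in>E1. (ends (\<psi> e) \<inter> ends (\<psi> e') \<noteq> {}) = (ends1 e \<inter> ends1 e' \<noteq> {})) \<and>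
     (\<forall>e\<in>E1. \<forall>x\<in>E. x \<notin> \<psi> ` E1 \<longrightarrow> ends (\<psi> e) \<inter> ends x = {})"

lemma part_chain:
  assumes p: "part \<psi> E1 ends1 E ends" and e0: "e0 \<in> E1"
  shows "chain_from E ends c a b (\<psi> e0) = \<psi> ` chain_from E1 ends1 (c \<circ> \<psi>) a b e0"
proof
  have inj: "inj_on \<psi> E1" and sub: "\<psi> ` E1 \<subseteq> E"
    and adj: "\<And>e e'. e \<in> E1 \<Longrightarrow> e' \<in> E1 \<Longrightarrow> (ends (\<psi> e) \<inter> ends (\<psi> e') \<noteq> {}) = (ends1 e \<inter> ends1 e' \<noteq> {})"
    and cross: "\<And>e x. e \<in> E1 \<Longrightarrow> x \<in> E \<Longrightarrow> x \<notin> \<psi> ` E1 \<Longrightarrow> ends (\<psi> e) \<inter> ends x = {}"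
    using p unfolding part_def by blast+
  show "chain_from E ends c a b (\<psi> e0) \<subseteq> \<psi> ` chain_from E1 ends1 (c \<circ> \<psi>) a b e0"
  proof
    fix y assume "y \<in> chain_from E ends c a b (\<psi> e0)"
    then have "(\<psi> e0, y) \<in> (kempe_adj E ends c a b)\<^sup>*" unfolding chain_from_def by simp
    then show "y \<in> \<psi> ` chain_from E1 ends1 (c \<circ> \<psi>) a b e0"
    proof (induction rule: rtrancl_induct)
      case base then show ?case using chain_start[of e0 E1 ends1 "c \<circ> \<psi>" a b] by blast
    next
      case (step y w)
      then obtain z where z: "z \<in> chain_from E1 ends1 (c \<circ> \<psi>) a b e0" "y = \<psi> z" by blast
      have zE: "z \<in> E1" using chain_sub_E[OF e0 z(1)] .
      have w: "w \<in> E" "c w \<in> {a,b}" "c y \<in> {a,b}" "ends y \<inter> ends w \<noteq> {}"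
        using step(2) unfolding kempe_adj_def by auto
      have "w \<in> \<psi> ` E1" using cross[OF zE w(1)] w(4) z(2) by blast
      then obtain z' where z': "z' \<in> E1" "w = \<psi> z'" by blast
      have "(z,z') \<in> kempe_adj E1 ends1 (c \<circ> \<psi>) a b"
        using w z z' zE adj[OF zE z'(1)] unfolding kempe_adj_def by auto
      then have "z' \<in> chain_from E1 ends1 (c \<circ> \<psi>) a b e0"
        using z(1) unfolding chain_from_def by (auto intro: rtrancl_into_rtrancl)
      then show ?case using z' by blast
    qed
  qed
  show "\<psi> ` chain_from E1 ends1 (c \<circ> \<psi>) a b e0 \<subseteq> chain_from E ends c a b (\<psi> e0)"
  proof
    fix y assume "y \<in> \<psi> ` chain_from E1 ends1 (c \<circ> \<psi>) a b e0"
    then obtain z where z: "z \<in> chain_from E1 ends1 (c \<circ> \<psi>) a b e0" "y = \<psi> z" by blast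
    have "(e0, z) \<in> (kempe_adj E1 ends1 (c \<circ> \<psi>) a b)\<^sup>*" using z(1) unfolding chain_from_def by simp
    then have "(\<psi> e0, \<psi> z) \<in> (kempe_adj E ends c a b)\<^sup>*"
    proof (induction rule: rtrancl_induct)
      case base then show ?case by simp
    next
      case (step u v)
      then have "(\<psi> u, \<psi> v) \<in> kempe_adj E ends c a b"
        using sub adj unfolding kempe_adj_def by auto
      then show ?case using step by (auto intro: rtrancl_into_rtrancl)
    qed
    then show "y \<in> chain_from E ends c a b (\<psi> e0)" using z unfolding chain_from_def by simp
  qed
qed

lemma part_switch:
  fixes c :: "'e \<Rightarrow> nat" and a b :: nat
  assumes p: "part \<psi> E1 ends1 E ends" and e0: "e0 \<in> E1"
  defines "K \<equiv> chain_from E ends c a b (\<psi> e0)"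
  defines "c1 \<equiv> restrict (c \<circ> \<psi>) E1"
  shows "restrict (swapK c a b K \<circ> \<psi>) E1 = swapK c1 a b (chain_from E1 ends1 c1 a b e0)"
    and "\<And>x. x \<notin> \<psi> ` E1 \<Longrightarrow> swapK c a b K x = c x"
proof -
  have inj: "inj_on \<psi> E1" using p unfolding part_def by blast
  have cf: "chain_from E1 ends1 c1 a b e0 = chain_from E1 ends1 (c \<circ> \<psi>) a b e0"
    unfolding c1_def by (rule chain_from_cong) simp
  have K: "K = \<psi> ` chain_from E1 ends1 c1 a b e0" unfolding K_def cf using part_chain[OF p e0] .
  have K1sub: "chain_from E1 ends1 c1 a b e0 \<subseteq> E1" using chain_sub_E[OF e0] by blast
  show "restrict (swapK c a b K \<circ> \<psi>) E1 = swapK c1 a b (chain_from E1 ends1 c1 a b e0)"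
  proof
    fix z show "restrict (swapK c a b K \<circ> \<psi>) E1 z = swapK c1 a b (chain_from E1 ends1 c1 a b e0) z"
    proof (cases "z \<in> E1")
      case True
      have "(\<psi> z \<in> K) = (z \<in> chain_from E1 ends1 c1 a b e0)"
        unfolding K using inj K1sub True by (auto dest: inj_onD)
      then show ?thesis using True unfolding swapK_def c1_def by auto
    next
      case False
      then show ?thesis using K1sub unfolding swapK_def c1_def by auto
    qed
  qed
  show "\<And>x. x \<notin> \<psi> ` E1 \<Longrightarrow> swapK c a b K x = c x"
    using K K1sub unfolding swapK_def by auto
qed

lemma part_proper:
  assumes p: "part \<psi> E1 ends1 E ends" and c: "c \<in> proper_3_edge_colorings E ends"
  shows "restrict (c \<circ> \<psi>) E1 \<in> proper_3_edge_colorings E1 ends1"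
proof -
  have inj: "inj_on \<psi> E1" and sub: "\<psi> ` E1 \<subseteq> E"
    and adj: "\<And>e e'. e \<in> E1 \<Longrightarrow> e' \<in> E1 \<Longrightarrow> (ends (\<psi> e) \<inter> ends (\<psi> e') \<noteq> {}) = (ends1 e \<inter> ends1 e' \<noteq> {})"
    using p unfolding part_def by blast+
  have cp: "c \<in> E \<rightarrow>\<^sub>E {1,2,3}" and cpr: "\<And>x y. x \<in> E \<Longrightarrow> y \<in> E \<Longrightarrow> x \<noteq> y \<Longrightarrow> ends x \<inter> ends y \<noteq> {} \<Longrightarrow> c x \<noteq> c y"
    using c unfolding proper_iff by auto
  show ?thesis unfolding proper_iff
  proof (intro conjI ballI impI)
    show "restrict (c \<circ> \<psi>) E1 \<in> E1 \<rightarrow>\<^sub>E {1, 2, 3}"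
      using cp sub by (auto simp: PiE_iff)
  next
    fix x y assume xy: "x \<in> E1" "y \<in> E1" "x \<noteq> y \<and> ends1 x \<inter> ends1 y \<noteq> {}"
    have "\<psi> x \<noteq> \<psi> y" using inj xy by (meson inj_onD)
    moreover have "ends (\<psi> x) \<inter> ends (\<psi> y) \<noteq> {}" using adj[OF xy(1,2)] xy(3) by blast
    ultimately have "c (\<psi> x) \<noteq> c (\<psi> y)" using cpr sub xy by blast
    then show "restrict (c \<circ> \<psi>) E1 x \<noteq> restrict (c \<circ> \<psi>) E1 y" using xy by simp
  qed
qed



locale uni =
  fixes V1 :: "'v1 set" and E1 :: "'e1 set" and ends1 :: "'e1 \<Rightarrow> 'v1 set"
    and V2 :: "'v2 set" and E2 :: "'e2 set" and ends2 :: "'e2 \<Rightarrow> 'v2 set"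
    and V :: "'v set" and E :: "'e set" and ends :: "'e \<Rightarrow> 'v set"
    and \<psi>1 :: "'e1 \<Rightarrow> 'e" and \<psi>2 :: "'e2 \<Rightarrow> 'e" and \<phi>1 :: "'v1 \<Rightarrow> 'v" and \<phi>2 :: "'v2 \<Rightarrow> 'v"
  assumes g1: "graph V1 E1 ends1" and g2: "graph V2 E2 ends2"
    and i1: "inj_on \<psi>1 E1" and i2: "inj_on \<psi>2 E2" and dE: "\<psi>1 ` E1 \<inter> \<psi>2 ` E2 = {}"
    and j1: "inj_on \<phi>1 V1" and j2: "inj_on \<phi>2 V2" and dV: "\<phi>1 ` V1 \<inter> \<phi>2 ` V2 = {}"
    and EE: "E = \<psi>1 ` E1 \<union> \<psi>2 ` E2" and VV: "V = \<phi>1 ` V1 \<union> \<phi>2 ` V2"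
    and en1: "\<And>e. e \<in> E1 \<Longrightarrow> ends (\<psi>1 e) = \<phi>1 ` ends1 e"
    and en2: "\<And>e. e \<in> E2 \<Longrightarrow> ends (\<psi>2 e) = \<phi>2 ` ends2 e"
begin

lemma ends1V: "e \<in> E1 \<Longrightarrow> ends1 e \<subseteq> V1" using g1 unfolding graph_def by auto
lemma ends2V: "e \<in> E2 \<Longrightarrow> ends2 e \<subseteq> V2" using g2 unfolding graph_def by auto

lemma img_int: "inj_on f A \<Longrightarrow> X \<subseteq> A \<Longrightarrow> Y \<subseteq> A \<Longrightarrow> f ` X \<inter> f ` Y = f ` (X \<inter> Y)"
  by (simp add: inj_on_image_Int)

lemma cross: "e \<in> E1 \<Longrightarrow> e' \<in> E2 \<Longrightarrow> ends (\<psi>1 e) \<inter> ends (\<psi>2 e') = {}"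
  using en1 en2 ends1V ends2V dV by blast

lemma part1: "part \<psi>1 E1 ends1 E ends"
  unfolding part_def
proof (intro conjI ballI impI)
  show "inj_on \<psi>1 E1" by (rule i1)
  show "\<psi>1 ` E1 \<subseteq> E" using EE by blast
next
  fix e e' assume "e \<in> E1" "e' \<in> E1"
  then show "(ends (\<psi>1 e) \<inter> ends (\<psi>1 e') \<noteq> {}) = (ends1 e \<inter> ends1 e' \<noteq> {})"
    using en1 img_int[OF j1 ends1V ends1V] by simp
next
  fix e x assume "e \<in> E1" "x \<in> E" "x \<notin> \<psi>1 ` E1"
  then obtain e' where "e' \<in> E2" "x = \<psi>2 e'" using EE by blast
  then show "ends (\<psi>1 e) \<inter> ends x = {}" using cross \<open>e \<in> E1\<close> by blast
qed

lemma part2: "part \<psi>2 E2 ends2 E ends"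
  unfolding part_def
proof (intro conjI ballI impI)
  show "inj_on \<psi>2 E2" by (rule i2)
  show "\<psi>2 ` E2 \<subseteq> E" using EE by blast
next
  fix e e' assume "e \<in> E2" "e' \<in> E2"
  then show "(ends (\<psi>2 e) \<inter> ends (\<psi>2 e') \<noteq> {}) = (ends2 e \<inter> ends2 e' \<noteq> {})"
    using en2 img_int[OF j2 ends2V ends2V] by simp
next
  fix e x assume "e \<in> E2" "x \<in> E" "x \<notin> \<psi>2 ` E2"
  then obtain e' where "e' \<in> E1" "x = \<psi>1 e'" using EE by blast
  then show "ends (\<psi>2 e) \<inter> ends x = {}" using cross \<open>e \<in> E2\<close> by blast
qed

abbreviation "P \<equiv> proper_3_edge_colorings E ends"
abbreviation "P1 \<equiv> proper_3_edge_colorings E1 ends1"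
abbreviation "P2 \<equiv> proper_3_edge_colorings E2 ends2"

definition F where "F c = (restrict (c \<circ> \<psi>1) E1, restrict (c \<circ> \<psi>2) E2)"

lemma F_inj: "inj_on F P"
proof (rule inj_onI)
  fix c c' assume c: "c \<in> P" "c' \<in> P" "F c = F c'"
  show "c = c'"
  proof
    fix x
    show "c x = c' x"
    proof (cases "x \<in> E")
      case True
      then consider (a) e where "e \<in> E1" "x = \<psi>1 e" | (b) e where "e \<in> E2" "x = \<psi>2 e" using EE by blast
      then show ?thesis
      proof cases
        case a then show ?thesis using c(3) unfolding F_def by (metis comp_apply fst_conv restrict_apply')
      next
        case b then show ?thesis using c(3) unfolding F_def by (metis comp_apply snd_conv restrict_apply')
      qed
    next
      case False then show ?thesis using c(1,2) unfolding proper_iff by (auto simp: PiE_iff extensional_def)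
    qed
  qed
qed

definition G where "G c1 c2 = (\<lambda>x. if x \<in> \<psi>1 ` E1 then c1 (inv_into E1 \<psi>1 x)
   else if x \<in> \<psi>2 ` E2 then c2 (inv_into E2 \<psi>2 x) else undefined)"

lemma G1: "e \<in> E1 \<Longrightarrow> G c1 c2 (\<psi>1 e) = c1 e" unfolding G_def using i1 by simp
lemma G2: "e \<in> E2 \<Longrightarrow> G c1 c2 (\<psi>2 e) = c2 e" unfolding G_def using i2 dE by auto

lemma G_proper: assumes "c1 \<in> P1" "c2 \<in> P2" shows "G c1 c2 \<in> P"
proof -
  have c1: "c1 \<in> E1 \<rightarrow>\<^sub>E {1,2,3}" "\<And>x y. x \<in> E1 \<Longrightarrow> y \<in> E1 \<Longrightarrow> x \<noteq> y \<Longrightarrow> ends1 x \<inter> ends1 y \<noteq> {} \<Longrightarrow> c1 x \<noteq> c1 y"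
    using assms(1) unfolding proper_iff by auto
  have c2: "c2 \<in> E2 \<rightarrow>\<^sub>E {1,2,3}" "\<And>x y. x \<in> E2 \<Longrightarrow> y \<in> E2 \<Longrightarrow> x \<noteq> y \<Longrightarrow> ends2 x \<inter> ends2 y \<noteq> {} \<Longrightarrow> c2 x \<noteq> c2 y"
    using assms(2) unfolding proper_iff by auto
  show ?thesis unfolding proper_iff
  proof (intro conjI ballI impI)
    show "G c1 c2 \<in> E \<rightarrow>\<^sub>E {1, 2, 3}"
    proof (rule PiE_I)
      fix x assume "x \<in> E"
      then consider (a) e where "e \<in> E1" "x = \<psi>1 e" | (b) e where "e \<in> E2" "x = \<psi>2 e" using EE by blast
      then show "G c1 c2 x \<in> {1,2,3}"
      proof cases
        case a then show ?thesis using G1[OF a(1), of c1 c2] c1(1) by (simp add: PiE_iff)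
      next
        case b then show ?thesis using G2[OF b(1), of c1 c2] c2(1) by (simp add: PiE_iff)
      qed
    next
      fix x assume "x \<notin> E" then show "G c1 c2 x = undefined" unfolding G_def EE by auto
    qed
  next
    fix x y assume xy: "x \<in> E" "y \<in> E" "x \<noteq> y \<and> ends x \<inter> ends y \<noteq> {}"
    from xy(1) consider (a) e where "e \<in> E1" "x = \<psi>1 e" | (b) e where "e \<in> E2" "x = \<psi>2 e" using EE by blast
    then show "G c1 c2 x \<noteq> G c1 c2 y"
    proof cases
      case a
      from xy(2) consider (a') e' where "e' \<in> E1" "y = \<psi>1 e'" | (b') e' where "e' \<in> E2" "y = \<psi>2 e'" using EE by blast
      then show ?thesis
      proof cases
        case a'
        have "e \<noteq> e'" using a a' xy by blast
        moreover have "ends1 e \<inter> ends1 e' \<noteq> {}" using part1 a a' xy unfolding part_def by blast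
        ultimately show ?thesis using c1(2)[OF a(1) a'(1)] G1[OF a(1), of c1 c2] G1[OF a'(1), of c1 c2] a(2) a'(2) by simp
      next
        case b' then show ?thesis using a xy cross by blast
      qed
    next
      case b
      from xy(2) consider (a') e' where "e' \<in> E1" "y = \<psi>1 e'" | (b') e' where "e' \<in> E2" "y = \<psi>2 e'" using EE by blast
      then show ?thesis
      proof cases
        case b'
        have "e \<noteq> e'" using b b' xy by blast
        moreover have "ends2 e \<inter> ends2 e' \<noteq> {}" using part2 b b' xy unfolding part_def by blast
        ultimately show ?thesis using c2(2)[OF b(1) b'(1)] G2[OF b(1), of c1 c2] G2[OF b'(1), of c1 c2] b(2) b'(2) by simp
      next
        case a' then show ?thesis using b xy cross by (metis inf_commute)
      qed
    qed
  qed
qed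

lemma FG: assumes "c1 \<in> P1" "c2 \<in> P2" shows "F (G c1 c2) = (c1, c2)"
proof -
  have "restrict (G c1 c2 \<circ> \<psi>1) E1 = c1"
  proof
    fix e show "restrict (G c1 c2 \<circ> \<psi>1) E1 e = c1 e"
      using assms(1) G1 unfolding proper_iff by (auto simp: PiE_iff extensional_def)
  qed
  moreover have "restrict (G c1 c2 \<circ> \<psi>2) E2 = c2"
  proof
    fix e show "restrict (G c1 c2 \<circ> \<psi>2) E2 e = c2 e"
      using assms(2) G2 unfolding proper_iff by (auto simp: PiE_iff extensional_def)
  qed
  ultimately show ?thesis unfolding F_def by simp
qed

lemma F_bij: "bij_betw F P (P1 \<times> P2)"
proof (rule bij_betw_imageI[OF F_inj])
  show "F ` P = P1 \<times> P2"
  proof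
    show "F ` P \<subseteq> P1 \<times> P2" unfolding F_def using part_proper[OF part1] part_proper[OF part2] by auto
    show "P1 \<times> P2 \<subseteq> F ` P"
    proof clarify
      fix c1 c2 assume "c1 \<in> P1" "c2 \<in> P2"
      then show "(c1, c2) \<in> F ` P" using FG G_proper by (metis image_eqI)
    qed
  qed
qed

abbreviation "S1 \<equiv> kstep E1 ends1"
abbreviation "S2 \<equiv> kstep E2 ends2"
abbreviation "SP \<equiv> {((x,y),(x',y)) | x x' y. (x,x') \<in> S1 \<and> y \<in> P2} \<union>
                 {((x,y),(x,y')) | x y y'. x \<in> P1 \<and> (y,y') \<in> S2}"

lemma step_iff:
  assumes c: "c \<in> P" and d: "d \<in> P"
  shows "(c,d) \<in> kstep E ends \<longleftrightarrow> (F c, F d) \<in> SP"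
proof
  assume "(c,d) \<in> kstep E ends"
  then obtain a b x where ab: "a \<in> {1,2,3}" "b \<in> {1,2,3}" "a \<noteq> b" and x: "x \<in> E" "c x \<in> {a,b}"
    and dd: "d = swapK c a b (chain_from E ends c a b x)"
    unfolding kstep_def kempe_switch_alt by blast
  have cP1: "restrict (c \<circ> \<psi>1) E1 \<in> P1" and cP2: "restrict (c \<circ> \<psi>2) E2 \<in> P2"
    using part_proper[OF part1 c] part_proper[OF part2 c] .
  from x(1) consider (a) e where "e \<in> E1" "x = \<psi>1 e" | (b) e where "e \<in> E2" "x = \<psi>2 e" using EE by blast
  then show "(F c, F d) \<in> SP"
  proof cases
    case a
    let ?c1 = "restrict (c \<circ> \<psi>1) E1"
    have s1: "restrict (d \<circ> \<psi>1) E1 = swapK ?c1 a b (chain_from E1 ends1 ?c1 a b e)"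
      using part_switch(1)[OF part1 a(1), of c a b] dd a by simp
    have "\<psi>2 z \<notin> \<psi>1 ` E1" if "z \<in> E2" for z using dE that by blast
    then have s2: "restrict (d \<circ> \<psi>2) E2 = restrict (c \<circ> \<psi>2) E2"
      using part_switch(2)[OF part1 a(1), of _ c a b] dd a by (auto simp: restrict_def)
    have "kempe_switch E1 ends1 ?c1 (restrict (d \<circ> \<psi>1) E1)"
      unfolding kempe_switch_alt using ab a x s1 by auto
    then have "(?c1, restrict (d \<circ> \<psi>1) E1) \<in> S1" using cP1 unfolding kstep_def by simp
    then show ?thesis unfolding F_def s2 using cP2 by blast
  next
    case b
    let ?c2 = "restrict (c \<circ> \<psi>2) E2"
    have s1: "restrict (d \<circ> \<psi>2) E2 = swapK ?c2 a b (chain_from E2 ends2 ?c2 a b e)"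
      using part_switch(1)[OF part2 b(1), of c a b] dd b by simp
    have "\<psi>1 z \<notin> \<psi>2 ` E2" if "z \<in> E1" for z using dE that by blast
    then have s2: "restrict (d \<circ> \<psi>1) E1 = restrict (c \<circ> \<psi>1) E1"
      using part_switch(2)[OF part2 b(1), of _ c a b] dd b by (auto simp: restrict_def)
    have "kempe_switch E2 ends2 ?c2 (restrict (d \<circ> \<psi>2) E2)"
      unfolding kempe_switch_alt using ab b x s1 by auto
    then have "(?c2, restrict (d \<circ> \<psi>2) E2) \<in> S2" using cP2 unfolding kstep_def by simp
    then show ?thesis unfolding F_def s2 using cP1 by blast
  qed
next
  assume "(F c, F d) \<in> SP"
  then consider (a) "(restrict (c \<circ> \<psi>1) E1, restrict (d \<circ> \<psi>1) E1) \<in> S1"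
      "restrict (d \<circ> \<psi>2) E2 = restrict (c \<circ> \<psi>2) E2"
    | (b) "(restrict (c \<circ> \<psi>2) E2, restrict (d \<circ> \<psi>2) E2) \<in> S2"
      "restrict (d \<circ> \<psi>1) E1 = restrict (c \<circ> \<psi>1) E1"
    unfolding F_def by auto
  then show "(c,d) \<in> kstep E ends"
  proof cases
    case a
    let ?c1 = "restrict (c \<circ> \<psi>1) E1"
    obtain a b e where ab: "a \<in> {1,2,3}" "b \<in> {1,2,3}" "a \<noteq> b" and e: "e \<in> E1" "?c1 e \<in> {a,b}"
      and dd: "restrict (d \<circ> \<psi>1) E1 = swapK ?c1 a b (chain_from E1 ends1 ?c1 a b e)"
      using a(1) unfolding kstep_def kempe_switch_alt by blast
    let ?d = "swapK c a b (chain_from E ends c a b (\<psi>1 e))"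
    have xE: "\<psi>1 e \<in> E" "c (\<psi>1 e) \<in> {a,b}" using e EE by auto
    have st: "(c, ?d) \<in> kstep E ends" unfolding kstep_def kempe_switch_alt using c ab xE by blast
    have dP: "?d \<in> P" using switch_proper[OF c xE ab] .
    have s1: "restrict (?d \<circ> \<psi>1) E1 = restrict (d \<circ> \<psi>1) E1"
      using part_switch(1)[OF part1 e(1), of c a b] dd by simp
    have "\<psi>2 z \<notin> \<psi>1 ` E1" if "z \<in> E2" for z using dE that by blast
    then have s2: "restrict (?d \<circ> \<psi>2) E2 = restrict (d \<circ> \<psi>2) E2"
      using part_switch(2)[OF part1 e(1), of _ c a b] a(2) by (auto simp: restrict_def fun_eq_iff)
    have "F ?d = F d" unfolding F_def using s1 s2 by simp
    then have "?d = d" using F_inj dP d by (meson inj_onD)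
    then show ?thesis using st by simp
  next
    case b
    let ?c2 = "restrict (c \<circ> \<psi>2) E2"
    obtain a b e where ab: "a \<in> {1,2,3}" "b \<in> {1,2,3}" "a \<noteq> b" and e: "e \<in> E2" "?c2 e \<in> {a,b}"
      and dd: "restrict (d \<circ> \<psi>2) E2 = swapK ?c2 a b (chain_from E2 ends2 ?c2 a b e)"
      using b(1) unfolding kstep_def kempe_switch_alt by blast
    let ?d = "swapK c a b (chain_from E ends c a b (\<psi>2 e))"
    have xE: "\<psi>2 e \<in> E" "c (\<psi>2 e) \<in> {a,b}" using e EE by auto
    have st: "(c, ?d) \<in> kstep E ends" unfolding kstep_def kempe_switch_alt using c ab xE by blast
    have dP: "?d \<in> P" using switch_proper[OF c xE ab] .
    have s1: "restrict (?d \<circ> \<psi>2) E2 = restrict (d \<circ> \<psi>2) E2"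
      using part_switch(1)[OF part2 e(1), of c a b] dd by simp
    have "\<psi>1 z \<notin> \<psi>2 ` E2" if "z \<in> E1" for z using dE that by blast
    then have s2: "restrict (?d \<circ> \<psi>1) E1 = restrict (d \<circ> \<psi>1) E1"
      using part_switch(2)[OF part2 e(1), of _ c a b] b(2) by (auto simp: restrict_def fun_eq_iff)
    have "F ?d = F d" unfolding F_def using s1 s2 by simp
    then have "?d = d" using F_inj dP d by (meson inj_onD)
    then show ?thesis using st by simp
  qed
qed

lemma kempe_union: "kempe_classes_3 E ends = kempe_classes_3 E1 ends1 * kempe_classes_3 E2 ends2"
proof -
  have "card (P // (kstep E ends)\<^sup>*) = card ((P1 \<times> P2) // SP\<^sup>*)"
  proof (rule classes_transport[OF F_bij kstep_sub])
    show "SP \<subseteq> (P1 \<times> P2) \<times> (P1 \<times> P2)" using kstep_sub[of E1 ends1] kstep_sub[of E2 ends2] by blast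
    show "\<And>x y. x \<in> P \<Longrightarrow> y \<in> P \<Longrightarrow> ((x, y) \<in> kstep E ends) = ((F x, F y) \<in> SP)"
      by (rule step_iff)
  qed
  also have "\<dots> = card (P1 // S1\<^sup>*) * card (P2 // S2\<^sup>*)"
    by (rule classes_product[OF kstep_sub kstep_sub])
  finally show ?thesis unfolding kempe_classes_3_def kempe_equiv_kstep .
qed


lemma fin1: "finite V1" "finite E1" using g1 unfolding graph_def by auto
lemma fin2: "finite V2" "finite E2" using g2 unfolding graph_def by auto

lemma graph_union: "graph V E ends"
proof -
  have fV: "finite V" "finite E" using fin1 fin2 VV EE by auto
  have "ends x \<subseteq> V \<and> card (ends x) = 2" if "x \<in> E" for x
  proof -
  from that consider (a) e where "e \<in> E1" "x = \<psi>1 e" | (b) e where "e \<in> E2" "x = \<psi>2 e" using EE by blast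
  then show "ends x \<subseteq> V \<and> card (ends x) = 2"
  proof cases
    case a
    have "card (\<phi>1 ` ends1 e) = card (ends1 e)" using j1 ends1V[OF a(1)] by (meson card_image inj_on_subset)
    moreover have "ends x \<subseteq> V" using a en1[OF a(1)] ends1V[OF a(1)] VV by blast
    ultimately show ?thesis using a en1[OF a(1)] g1 unfolding graph_def by auto
  next
    case b
    have "card (\<phi>2 ` ends2 e) = card (ends2 e)" using j2 ends2V[OF b(1)] by (meson card_image inj_on_subset)
    moreover have "ends x \<subseteq> V" using b en2[OF b(1)] ends2V[OF b(1)] VV by blast
    ultimately show ?thesis using b en2[OF b(1)] g2 unfolding graph_def by auto
  qed
  qed
  then show ?thesis using fV unfolding graph_def by blast
qed

lemma card_union: "card V = card V1 + card V2"
proof -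
  have "card V = card (\<phi>1 ` V1) + card (\<phi>2 ` V2)" unfolding VV
    using fin1 fin2 dV by (simp add: card_Un_disjoint)
  then show ?thesis using j1 j2 by (simp add: card_image)
qed

lemma cubic_union:
  assumes "cubic V1 E1 ends1" "cubic V2 E2 ends2" shows "cubic V E ends"
  unfolding cubic_def
proof
  fix v assume "v \<in> V"
  then consider (a) u where "u \<in> V1" "v = \<phi>1 u" | (b) u where "u \<in> V2" "v = \<phi>2 u" using VV by blast
  then show "degree E ends v = 3"
  proof cases
    case a
    have "{x\<in>E. v \<in> ends x} = \<psi>1 ` {e\<in>E1. u \<in> ends1 e}"
    proof
      show "{x\<in>E. v \<in> ends x} \<subseteq> \<psi>1 ` {e\<in>E1. u \<in> ends1 e}"
      proof clarify
        fix x assume x: "x \<in> E" "v \<in> ends x"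
        then consider (a1) e where "e \<in> E1" "x = \<psi>1 e" | (b1) e where "e \<in> E2" "x = \<psi>2 e" using EE by blast
        then show "x \<in> \<psi>1 ` {e\<in>E1. u \<in> ends1 e}"
        proof cases
          case a1
          then have "\<phi>1 u \<in> \<phi>1 ` ends1 e" using x a en1 by simp
          then have "u \<in> ends1 e" using j1 ends1V[OF a1(1)] a(1) by (auto dest: inj_onD)
          then show ?thesis using a1 by blast
        next
          case b1
          then have "\<phi>1 u \<in> \<phi>2 ` V2" using x a en2 ends2V by blast
          then show ?thesis using dV a(1) by blast
        qed
      qed
      show "\<psi>1 ` {e\<in>E1. u \<in> ends1 e} \<subseteq> {x\<in>E. v \<in> ends x}" using EE en1 a by auto
    qed
    then have "degree E ends v = card {e\<in>E1. u \<in> ends1 e}" unfolding degree_def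
      using i1 by (simp add: card_image inj_on_subset)
    then show ?thesis using assms(1) a unfolding cubic_def degree_def by simp
  next
    case b
    have "{x\<in>E. v \<in> ends x} = \<psi>2 ` {e\<in>E2. u \<in> ends2 e}"
    proof
      show "{x\<in>E. v \<in> ends x} \<subseteq> \<psi>2 ` {e\<in>E2. u \<in> ends2 e}"
      proof clarify
        fix x assume x: "x \<in> E" "v \<in> ends x"
        then consider (a1) e where "e \<in> E1" "x = \<psi>1 e" | (b1) e where "e \<in> E2" "x = \<psi>2 e" using EE by blast
        then show "x \<in> \<psi>2 ` {e\<in>E2. u \<in> ends2 e}"
        proof cases
          case b1
          then have "\<phi>2 u \<in> \<phi>2 ` ends2 e" using x b en2 by simp
          then have "u \<in> ends2 e" using j2 ends2V[OF b1(1)] b(1) by (auto dest: inj_onD)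
          then show ?thesis using b1 by blast
        next
          case a1
          then have "\<phi>2 u \<in> \<phi>1 ` V1" using x b en1 ends1V by blast
          then show ?thesis using dV b(1) by blast
        qed
      qed
      show "\<psi>2 ` {e\<in>E2. u \<in> ends2 e} \<subseteq> {x\<in>E. v \<in> ends x}" using EE en2 b by auto
    qed
    then have "degree E ends v = card {e\<in>E2. u \<in> ends2 e}" unfolding degree_def
      using i2 by (simp add: card_image inj_on_subset)
    then show ?thesis using assms(2) b unfolding cubic_def degree_def by simp
  qed
qed

lemma bip_union:
  assumes "bipartite V1 E1 ends1" "bipartite V2 E2 ends2" shows "bipartite V E ends"
proof -
  obtain A1 where A1: "A1 \<subseteq> V1" "\<forall>e\<in>E1. card (ends1 e \<inter> A1) = 1" using assms(1) unfolding bipartite_def by blast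
  obtain A2 where A2: "A2 \<subseteq> V2" "\<forall>e\<in>E2. card (ends2 e \<inter> A2) = 1" using assms(2) unfolding bipartite_def by blast
  let ?A = "\<phi>1 ` A1 \<union> \<phi>2 ` A2"
  have "?A \<subseteq> V" using A1 A2 VV by blast
  moreover have "\<forall>x\<in>E. card (ends x \<inter> ?A) = 1"
  proof
    fix x assume "x \<in> E"
    then consider (a) e where "e \<in> E1" "x = \<psi>1 e" | (b) e where "e \<in> E2" "x = \<psi>2 e" using EE by blast
    then show "card (ends x \<inter> ?A) = 1"
    proof cases
      case a
      have "ends x \<inter> ?A = \<phi>1 ` ends1 e \<inter> \<phi>1 ` A1" using a en1 ends1V[OF a(1)] A2(1) dV by blast
      also have "\<dots> = \<phi>1 ` (ends1 e \<inter> A1)" using img_int[OF j1 ends1V[OF a(1)] A1(1)] .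
      finally show ?thesis using A1(2) a(1) j1 ends1V[OF a(1)]
        by (metis card_image inf.coboundedI1 inj_on_subset)
    next
      case b
      have "ends x \<inter> ?A = \<phi>2 ` ends2 e \<inter> \<phi>2 ` A2" using b en2 ends2V[OF b(1)] A1(1) dV by blast
      also have "\<dots> = \<phi>2 ` (ends2 e \<inter> A2)" using img_int[OF j2 ends2V[OF b(1)] A2(1)] .
      finally show ?thesis using A2(2) b(1) j2 ends2V[OF b(1)]
        by (metis card_image inf.coboundedI1 inj_on_subset)
    qed
  qed
  ultimately show ?thesis unfolding bipartite_def by blast
qed

lemma planar_union: assumes "planar V E ends" shows "planar V1 E1 ends1"
proof -
  obtain f :: "'v \<Rightarrow> complex" and \<gamma> :: "'e \<Rightarrow> real \<Rightarrow> complex" where f: "inj_on f V"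
    and g: "\<And>e. e\<in>E \<Longrightarrow> arc (\<gamma> e) \<and> {pathstart (\<gamma> e), pathfinish (\<gamma> e)} = f ` ends e \<and>
                path_image (\<gamma> e) \<inter> f ` V \<subseteq> f ` ends e"
    and h: "\<And>e e'. e\<in>E \<Longrightarrow> e'\<in>E \<Longrightarrow> e \<noteq> e' \<Longrightarrow> path_image (\<gamma> e) \<inter> path_image (\<gamma> e') \<subseteq> f ` (ends e \<inter> ends e')"
    using assms unfolding planar_def by metis
  have E1E: "\<psi>1 e \<in> E" if "e \<in> E1" for e using that EE by blast
  have V1V: "\<phi>1 ` V1 \<subseteq> V" using VV by blast
  have A: "inj_on (f \<circ> \<phi>1) V1" using f j1 V1V by (simp add: comp_inj_on inj_on_subset)
  have B: "arc ((\<gamma> \<circ> \<psi>1) e) \<and> {pathstart ((\<gamma> \<circ> \<psi>1) e), pathfinish ((\<gamma> \<circ> \<psi>1) e)} = (f \<circ> \<phi>1) ` ends1 e \<and>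
      path_image ((\<gamma> \<circ> \<psi>1) e) \<inter> (f \<circ> \<phi>1) ` V1 \<subseteq> (f \<circ> \<phi>1) ` ends1 e" if e: "e \<in> E1" for e
  proof -
    have g1: "arc (\<gamma> (\<psi>1 e))" "{pathstart (\<gamma> (\<psi>1 e)), pathfinish (\<gamma> (\<psi>1 e))} = f ` ends (\<psi>1 e)"
      "path_image (\<gamma> (\<psi>1 e)) \<inter> f ` V \<subseteq> f ` ends (\<psi>1 e)" using g[OF E1E[OF e]] by blast+
    have im: "(f \<circ> \<phi>1) ` ends1 e = f ` ends (\<psi>1 e)" using en1[OF e] by (simp add: image_comp)
    have im2: "(f \<circ> \<phi>1) ` V1 \<subseteq> f ` V" using V1V by auto
    show ?thesis unfolding comp_apply[of \<gamma> \<psi>1] im using g1 im2 by blast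
  qed
  have C: "path_image ((\<gamma> \<circ> \<psi>1) e) \<inter> path_image ((\<gamma> \<circ> \<psi>1) e') \<subseteq> (f \<circ> \<phi>1) ` (ends1 e \<inter> ends1 e')"
    if e: "e \<in> E1" "e' \<in> E1" "e \<noteq> e'" for e e'
  proof -
    have "\<psi>1 e \<noteq> \<psi>1 e'" using i1 e by (meson inj_onD)
    then have "path_image (\<gamma> (\<psi>1 e)) \<inter> path_image (\<gamma> (\<psi>1 e')) \<subseteq> f ` (ends (\<psi>1 e) \<inter> ends (\<psi>1 e'))"
      using h E1E e by blast
    also have "ends (\<psi>1 e) \<inter> ends (\<psi>1 e') = \<phi>1 ` (ends1 e \<inter> ends1 e')"
      using en1[OF e(1)] en1[OF e(2)] img_int[OF j1 ends1V[OF e(1)] ends1V[OF e(2)]] by simp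
    finally show ?thesis unfolding comp_apply[of \<gamma> \<psi>1] by (simp add: image_comp)
  qed
  show ?thesis unfolding planar_def
    apply (rule exI[of _ "f \<circ> \<phi>1"], rule exI[of _ "\<gamma> \<circ> \<psi>1"])
    using A B C by blast
qed
end


definition E33 :: "nat set" where "E33 = {..<9}"
definition V33 :: "nat set" where "V33 = {..<6}"
definition ends33 :: "nat \<Rightarrow> nat set" where "ends33 e = {e div 3, 3 + e mod 3}"

abbreviation "P33 \<equiv> proper_3_edge_colorings E33 ends33"

definition rc :: "nat \<Rightarrow> nat \<Rightarrow> bool" where "rc x y \<longleftrightarrow> x div 3 = y div 3 \<or> x mod 3 = y mod 3"

lemma nine: "(x::nat) < 9 \<Longrightarrow> x = 0 \<or> x = 1 \<or> x = 2 \<or> x = 3 \<or> x = 4 \<or> x = 5 \<or> x = 6 \<or> x = 7 \<or> x = 8"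
  by arith

lemma adj33: "x < 9 \<Longrightarrow> y < 9 \<Longrightarrow> (ends33 x \<inter> ends33 y \<noteq> {}) = rc x y"
  unfolding ends33_def rc_def by auto

lemma P33_val: "c \<in> P33 \<Longrightarrow> x < 9 \<Longrightarrow> c x \<in> {1,2,3}"
  unfolding proper_iff E33_def by auto
lemma P33_out: "c \<in> P33 \<Longrightarrow> \<not> x < 9 \<Longrightarrow> c x = undefined"
  unfolding proper_iff E33_def by (auto simp: PiE_iff extensional_def)
lemma P33_ne: "c \<in> P33 \<Longrightarrow> x < 9 \<Longrightarrow> y < 9 \<Longrightarrow> x \<noteq> y \<Longrightarrow> rc x y \<Longrightarrow> c x \<noteq> c y"
  unfolding proper_iff E33_def using adj33 by auto
lemma P33_intro:
  assumes "\<And>x. x < 9 \<Longrightarrow> c x \<in> {1,2,3}" "\<And>x. \<not> x < 9 \<Longrightarrow> c x = undefined"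
    "\<And>x y. x < 9 \<Longrightarrow> y < 9 \<Longrightarrow> x \<noteq> y \<Longrightarrow> rc x y \<Longrightarrow> c x \<noteq> c y"
  shows "c \<in> P33"
  unfolding proper_iff E33_def using assms adj33 by (auto simp: PiE_iff extensional_def)

lemma prop33:
  fixes s0 s1 s2 s3 s4 s5 s6 s7 s8 r0 r1 r2 r3 r4 r5 r6 r7 r8 :: bool
  assumes "s0 \<or> s1"
    and "s0 \<or> s2"
    and "s1 \<or> s2"
    and "s3 \<or> s4"
    and "s3 \<or> s5"
    and "s4 \<or> s5"
    and "s6 \<or> s7"
    and "s6 \<or> s8"
    and "s7 \<or> s8"
    and "s0 \<or> s3"
    and "s0 \<or> s6"
    and "s3 \<or> s6"
    and "s1 \<or> s4"
    and "s1 \<or> s7"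
    and "s4 \<or> s7"
    and "s2 \<or> s5"
    and "s2 \<or> s8"
    and "s5 \<or> s8"
    and "\<not> (s0 \<and> s1 \<and> s2)"
    and "\<not> (s3 \<and> s4 \<and> s5)"
    and "\<not> (s6 \<and> s7 \<and> s8)"
    and "\<not> (s0 \<and> s3 \<and> s6)"
    and "\<not> (s1 \<and> s4 \<and> s7)"
    and "\<not> (s2 \<and> s5 \<and> s8)"
    and "r0 \<longrightarrow> s0 \<longrightarrow> s1 \<longrightarrow> r1"
    and "r0 \<longrightarrow> s0 \<longrightarrow> s2 \<longrightarrow> r2"
    and "r1 \<longrightarrow> s1 \<longrightarrow> s0 \<longrightarrow> r0"
    and "r1 \<longrightarrow> s1 \<longrightarrow> s2 \<longrightarrow> r2"
    and "r2 \<longrightarrow> s2 \<longrightarrow> s0 \<longrightarrow> r0"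
    and "r2 \<longrightarrow> s2 \<longrightarrow> s1 \<longrightarrow> r1"
    and "r3 \<longrightarrow> s3 \<longrightarrow> s4 \<longrightarrow> r4"
    and "r3 \<longrightarrow> s3 \<longrightarrow> s5 \<longrightarrow> r5"
    and "r4 \<longrightarrow> s4 \<longrightarrow> s3 \<longrightarrow> r3"
    and "r4 \<longrightarrow> s4 \<longrightarrow> s5 \<longrightarrow> r5"
    and "r5 \<longrightarrow> s5 \<longrightarrow> s3 \<longrightarrow> r3"
    and "r5 \<longrightarrow> s5 \<longrightarrow> s4 \<longrightarrow> r4"
    and "r6 \<longrightarrow> s6 \<longrightarrow> s7 \<longrightarrow> r7"
    and "r6 \<longrightarrow> s6 \<longrightarrow> s8 \<longrightarrow> r8"
    and "r7 \<longrightarrow> s7 \<longrightarrow> s6 \<longrightarrow> r6"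
    and "r7 \<longrightarrow> s7 \<longrightarrow> s8 \<longrightarrow> r8"
    and "r8 \<longrightarrow> s8 \<longrightarrow> s6 \<longrightarrow> r6"
    and "r8 \<longrightarrow> s8 \<longrightarrow> s7 \<longrightarrow> r7"
    and "r0 \<longrightarrow> s0 \<longrightarrow> s3 \<longrightarrow> r3"
    and "r0 \<longrightarrow> s0 \<longrightarrow> s6 \<longrightarrow> r6"
    and "r3 \<longrightarrow> s3 \<longrightarrow> s0 \<longrightarrow> r0"
    and "r3 \<longrightarrow> s3 \<longrightarrow> s6 \<longrightarrow> r6"
    and "r6 \<longrightarrow> s6 \<longrightarrow> s0 \<longrightarrow> r0"
    and "r6 \<longrightarrow> s6 \<longrightarrow> s3 \<longrightarrow> r3"
    and "r1 \<longrightarrow> s1 \<longrightarrow> s4 \<longrightarrow> r4"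
    and "r1 \<longrightarrow> s1 \<longrightarrow> s7 \<longrightarrow> r7"
    and "r4 \<longrightarrow> s4 \<longrightarrow> s1 \<longrightarrow> r1"
    and "r4 \<longrightarrow> s4 \<longrightarrow> s7 \<longrightarrow> r7"
    and "r7 \<longrightarrow> s7 \<longrightarrow> s1 \<longrightarrow> r1"
    and "r7 \<longrightarrow> s7 \<longrightarrow> s4 \<longrightarrow> r4"
    and "r2 \<longrightarrow> s2 \<longrightarrow> s5 \<longrightarrow> r5"
    and "r2 \<longrightarrow> s2 \<longrightarrow> s8 \<longrightarrow> r8"
    and "r5 \<longrightarrow> s5 \<longrightarrow> s2 \<longrightarrow> r2"
    and "r5 \<longrightarrow> s5 \<longrightarrow> s8 \<longrightarrow> r8"
    and "r8 \<longrightarrow> s8 \<longrightarrow> s2 \<longrightarrow> r2"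
    and "r8 \<longrightarrow> s8 \<longrightarrow> s5 \<longrightarrow> r5"
    and "(r0 \<and> s0) \<or> (r1 \<and> s1) \<or> (r2 \<and> s2) \<or> (r3 \<and> s3) \<or> (r4 \<and> s4) \<or> (r5 \<and> s5) \<or> (r6 \<and> s6) \<or> (r7 \<and> s7) \<or> (r8 \<and> s8)"
  shows "(s0 \<longrightarrow> r0) \<and> (s1 \<longrightarrow> r1) \<and> (s2 \<longrightarrow> r2) \<and> (s3 \<longrightarrow> r3) \<and> (s4 \<longrightarrow> r4) \<and> (s5 \<longrightarrow> r5) \<and> (s6 \<longrightarrow> r6) \<and> (s7 \<longrightarrow> r7) \<and> (s8 \<longrightarrow> r8)"
  using assms by sat

lemma chain33:
  assumes c: "c \<in> P33" and ab: "a \<in> {1,2,3}" "b \<in> {1,2,3}" "a \<noteq> b"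
    and e: "e < 9" "c e \<in> {a,b}"
  shows "chain_from E33 ends33 c a b e = {y\<in>E33. c y \<in> {a,b}}"
proof
  have eE: "e \<in> E33" using e unfolding E33_def by simp
  show "chain_from E33 ends33 c a b e \<subseteq> {y\<in>E33. c y \<in> {a,b}}"
    using chain_sub[where E=E33 and ends=ends33 and c=c and a=a and b=b and e=e] eE e(2) by blast
  define S where "S = (\<lambda>i. c i \<in> {a,b})"
  define R where "R = (\<lambda>i. i \<in> chain_from E33 ends33 c a b e)"
  have stp: "R x \<longrightarrow> S x \<longrightarrow> S y \<longrightarrow> R y" if "x < 9" "y < 9" "x \<noteq> y" "rc x y" for x y
    using chain_closed[of x E33 ends33 c a b e y] that adj33[of x y] unfolding R_def S_def E33_def by auto
  have two: "S x \<or> S y" if "x < 9" "y < 9" "x \<noteq> y" "rc x y" for x y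
  proof (rule ccontr)
    assume "\<not> (S x \<or> S y)"
    then have "c x \<notin> {a,b}" "c y \<notin> {a,b}" unfolding S_def by auto
    moreover have "c x \<in> {1,2,3}" "c y \<in> {1,2,3}" "c x \<noteq> c y" using P33_val[OF c] P33_ne[OF c] that by auto
    ultimately show False using ab by auto
  qed
  have three: "\<not> (S x \<and> S y \<and> S z)" if "x < 9" "y < 9" "z < 9" "x \<noteq> y" "x \<noteq> z" "y \<noteq> z"
    "rc x y" "rc x z" "rc y z" for x y z
  proof
    assume "S x \<and> S y \<and> S z"
    then have "c x \<in> {a,b}" "c y \<in> {a,b}" "c z \<in> {a,b}" unfolding S_def by auto
    moreover have "c x \<noteq> c y" "c x \<noteq> c z" "c y \<noteq> c z" using P33_ne[OF c] that by auto
    ultimately show False by auto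
  qed
  have pre: "(R 0 \<and> S 0) \<or> (R 1 \<and> S 1) \<or> (R 2 \<and> S 2) \<or> (R 3 \<and> S 3) \<or> (R 4 \<and> S 4) \<or> (R 5 \<and> S 5) \<or> (R 6 \<and> S 6) \<or> (R 7 \<and> S 7) \<or> (R 8 \<and> S 8)"
  proof -
    have "R e" "S e" unfolding R_def S_def using chain_start e by auto
    then show ?thesis using nine[OF e(1)] by auto
  qed
  have concl: "(S 0 \<longrightarrow> R 0) \<and> (S 1 \<longrightarrow> R 1) \<and> (S 2 \<longrightarrow> R 2) \<and> (S 3 \<longrightarrow> R 3) \<and> (S 4 \<longrightarrow> R 4) \<and> (S 5 \<longrightarrow> R 5) \<and> (S 6 \<longrightarrow> R 6) \<and> (S 7 \<longrightarrow> R 7) \<and> (S 8 \<longrightarrow> R 8)"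
    apply (rule prop33)
    using two[of 0 1] apply (simp add: rc_def)
    using two[of 0 2] apply (simp add: rc_def)
    using two[of 1 2] apply (simp add: rc_def)
    using two[of 3 4] apply (simp add: rc_def)
    using two[of 3 5] apply (simp add: rc_def)
    using two[of 4 5] apply (simp add: rc_def)
    using two[of 6 7] apply (simp add: rc_def)
    using two[of 6 8] apply (simp add: rc_def)
    using two[of 7 8] apply (simp add: rc_def)
    using two[of 0 3] apply (simp add: rc_def)
    using two[of 0 6] apply (simp add: rc_def)
    using two[of 3 6] apply (simp add: rc_def)
    using two[of 1 4] apply (simp add: rc_def)
    using two[of 1 7] apply (simp add: rc_def)
    using two[of 4 7] apply (simp add: rc_def)
    using two[of 2 5] apply (simp add: rc_def)
    using two[of 2 8] apply (simp add: rc_def)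
    using two[of 5 8] apply (simp add: rc_def)
    using three[of 0 1 2] apply (simp add: rc_def)
    using three[of 3 4 5] apply (simp add: rc_def)
    using three[of 6 7 8] apply (simp add: rc_def)
    using three[of 0 3 6] apply (simp add: rc_def)
    using three[of 1 4 7] apply (simp add: rc_def)
    using three[of 2 5 8] apply (simp add: rc_def)
    using stp[of 0 1] apply (simp add: rc_def)
    using stp[of 0 2] apply (simp add: rc_def)
    using stp[of 1 0] apply (simp add: rc_def)
    using stp[of 1 2] apply (simp add: rc_def)
    using stp[of 2 0] apply (simp add: rc_def)
    using stp[of 2 1] apply (simp add: rc_def)
    using stp[of 3 4] apply (simp add: rc_def)
    using stp[of 3 5] apply (simp add: rc_def)
    using stp[of 4 3] apply (simp add: rc_def)
    using stp[of 4 5] apply (simp add: rc_def)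
    using stp[of 5 3] apply (simp add: rc_def)
    using stp[of 5 4] apply (simp add: rc_def)
    using stp[of 6 7] apply (simp add: rc_def)
    using stp[of 6 8] apply (simp add: rc_def)
    using stp[of 7 6] apply (simp add: rc_def)
    using stp[of 7 8] apply (simp add: rc_def)
    using stp[of 8 6] apply (simp add: rc_def)
    using stp[of 8 7] apply (simp add: rc_def)
    using stp[of 0 3] apply (simp add: rc_def)
    using stp[of 0 6] apply (simp add: rc_def)
    using stp[of 3 0] apply (simp add: rc_def)
    using stp[of 3 6] apply (simp add: rc_def)
    using stp[of 6 0] apply (simp add: rc_def)
    using stp[of 6 3] apply (simp add: rc_def)
    using stp[of 1 4] apply (simp add: rc_def)
    using stp[of 1 7] apply (simp add: rc_def)
    using stp[of 4 1] apply (simp add: rc_def)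
    using stp[of 4 7] apply (simp add: rc_def)
    using stp[of 7 1] apply (simp add: rc_def)
    using stp[of 7 4] apply (simp add: rc_def)
    using stp[of 2 5] apply (simp add: rc_def)
    using stp[of 2 8] apply (simp add: rc_def)
    using stp[of 5 2] apply (simp add: rc_def)
    using stp[of 5 8] apply (simp add: rc_def)
    using stp[of 8 2] apply (simp add: rc_def)
    using stp[of 8 5] apply (simp add: rc_def)
    using pre apply (simp add: rc_def)
    done

  show "{y\<in>E33. c y \<in> {a,b}} \<subseteq> chain_from E33 ends33 c a b e"
  proof
    fix y assume "y \<in> {y\<in>E33. c y \<in> {a,b}}"
    then have "y < 9" "S y" unfolding E33_def S_def by auto
    then have "R y" using concl nine[of y] by auto
    then show "y \<in> chain_from E33 ends33 c a b e" unfolding R_def .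
  qed
qed



definition sw33 :: "nat \<Rightarrow> nat \<Rightarrow> (nat \<Rightarrow> nat) \<Rightarrow> nat \<Rightarrow> nat" where
  "sw33 a b c = swapK c a b {y\<in>E33. c y \<in> {a,b}}"

lemma row0: assumes c: "c \<in> P33" and ab: "a \<in> {1,2,3}" shows "c 0 = a \<or> c 1 = a \<or> c 2 = a"
proof -
  have "c 0 \<in> {1,2,3}" "c 1 \<in> {1,2,3}" "c 2 \<in> {1,2,3}" using P33_val[OF c] by auto
  moreover have "c 0 \<noteq> c 1" "c 0 \<noteq> c 2" "c 1 \<noteq> c 2" using P33_ne[OF c] by (auto simp: rc_def)
  ultimately show ?thesis using ab by auto
qed

lemma kstep33:
  assumes c: "c \<in> P33"
  shows "(c,d) \<in> kstep E33 ends33 \<longleftrightarrow> (\<exists>a b. a \<in> {1,2,3} \<and> b \<in> {1,2,3} \<and> a \<noteq> b \<and> d = sw33 a b c)"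
proof
  assume "(c,d) \<in> kstep E33 ends33"
  then obtain a b e where ab: "a \<in> {1,2,3}" "b \<in> {1,2,3}" "a \<noteq> b" and e: "e \<in> E33" "c e \<in> {a,b}"
    and d: "d = swapK c a b (chain_from E33 ends33 c a b e)"
    unfolding kstep_def kempe_switch_alt by blast
  have "e < 9" using e unfolding E33_def by simp
  then have "d = sw33 a b c" using chain33[OF c ab] e d unfolding sw33_def by simp
  then show "\<exists>a b. a \<in> {1,2,3} \<and> b \<in> {1,2,3} \<and> a \<noteq> b \<and> d = sw33 a b c" using ab by blast
next
  assume "\<exists>a b. a \<in> {1,2,3} \<and> b \<in> {1,2,3} \<and> a \<noteq> b \<and> d = sw33 a b c"
  then obtain a b where ab: "a \<in> {1,2,3}" "b \<in> {1,2,3}" "a \<noteq> b" and d: "d = sw33 a b c" by blast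
  obtain e where e: "e < 9" "c e \<in> {a,b}"
  proof -
    have "c 0 = a \<or> c 1 = a \<or> c 2 = a" using row0[OF c ab(1)] .
    then show thesis using that[of 0] that[of 1] that[of 2] by auto
  qed
  have "d = swapK c a b (chain_from E33 ends33 c a b e)" using chain33[OF c ab e] d unfolding sw33_def by simp
  moreover have "e \<in> E33" using e unfolding E33_def by simp
  ultimately have "kempe_switch E33 ends33 c d" unfolding kempe_switch_alt using ab e by blast
  then show "(c,d) \<in> kstep E33 ends33" using c unfolding kstep_def by simp
qed

lemma sw33_P: "c \<in> P33 \<Longrightarrow> a \<in> {1,2,3} \<Longrightarrow> b \<in> {1,2,3} \<Longrightarrow> a \<noteq> b \<Longrightarrow> sw33 a b c \<in> P33"
  using kstep33[of c "sw33 a b c"] kstep_sub[of E33 ends33] by blast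

lemma sw33_inv: "a \<noteq> b \<Longrightarrow> sw33 a b (sw33 a b c) = c"
  unfolding sw33_def swapK_def by (auto simp: fun_eq_iff)

lemma kstep33_sym: "(c,d) \<in> kstep E33 ends33 \<Longrightarrow> (d,c) \<in> kstep E33 ends33"
proof -
  assume st: "(c,d) \<in> kstep E33 ends33"
  then have c: "c \<in> P33" unfolding kstep_def by simp
  then obtain a b where ab: "a \<in> {1,2,3}" "b \<in> {1,2,3}" "a \<noteq> b" and d: "d = sw33 a b c"
    using kstep33 st by blast
  have dP: "d \<in> P33" using sw33_P[OF c ab] d by simp
  have "c = sw33 a b d" using sw33_inv[OF ab(3)] d by simp
  then show ?thesis using kstep33[OF dP] ab by blast
qed

definition I33 :: "(nat \<Rightarrow> nat) \<Rightarrow> bool" where "I33 c \<longleftrightarrow> c 3 = c 1"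

lemma sw33_I: "I33 (sw33 a b c) = I33 c"
  unfolding I33_def sw33_def swapK_def E33_def by auto

lemma sw33_0: "sw33 a b c 0 = (if c 0 = a then b else if c 0 = b then a else c 0)"
  unfolding sw33_def swapK_def E33_def by auto
lemma sw33_1: "sw33 a b c 1 = (if c 1 = a then b else if c 1 = b then a else c 1)"
  unfolding sw33_def swapK_def E33_def by auto

definition N1 :: "nat \<Rightarrow> nat" where "N1 x = (if x < 9 then 1 + (x div 3 + x mod 3) mod 3 else undefined)"
definition N0 :: "nat \<Rightarrow> nat" where "N0 x = (if x < 9 then 1 + (2 * (x div 3) + x mod 3) mod 3 else undefined)"

lemma N1_P: "N1 \<in> P33"
proof (rule P33_intro)
  show "N1 x \<in> {1,2,3}" if "x < 9" for x using nine[OF that] unfolding N1_def by auto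
  show "N1 x = undefined" if "\<not> x < 9" for x using that unfolding N1_def by auto
  show "N1 x \<noteq> N1 y" if "x < 9" "y < 9" "x \<noteq> y" "rc x y" for x y
  proof -
    have "x = 0 \<or> x = 1 \<or> x = 2 \<or> x = 3 \<or> x = 4 \<or> x = 5 \<or> x = 6 \<or> x = 7 \<or> x = 8" using nine[OF that(1)] .
    then show ?thesis using nine[OF that(2)] that(3,4) unfolding N1_def rc_def by (elim disjE; simp; elim disjE; simp)
  qed
qed

lemma N0_P: "N0 \<in> P33"
proof (rule P33_intro)
  show "N0 x \<in> {1,2,3}" if "x < 9" for x using nine[OF that] unfolding N0_def by auto
  show "N0 x = undefined" if "\<not> x < 9" for x using that unfolding N0_def by auto
  show "N0 x \<noteq> N0 y" if "x < 9" "y < 9" "x \<noteq> y" "rc x y" for x y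
  proof -
    have "x = 0 \<or> x = 1 \<or> x = 2 \<or> x = 3 \<or> x = 4 \<or> x = 5 \<or> x = 6 \<or> x = 7 \<or> x = 8" using nine[OF that(1)] .
    then show ?thesis using nine[OF that(2)] that(3,4) unfolding N0_def rc_def by (elim disjE; simp; elim disjE; simp)
  qed
qed

lemma uniq:
  assumes c: "c \<in> P33" and c01: "c 0 = 1" "c 1 = 2"
  shows "c = (if I33 c then N1 else N0)"
proof -
  have v: "\<And>x. x < 9 \<Longrightarrow> c x \<in> {1,2,3}" using P33_val[OF c] .
  have ne: "\<And>x y. x < 9 \<Longrightarrow> y < 9 \<Longrightarrow> x \<noteq> y \<Longrightarrow> rc x y \<Longrightarrow> c x \<noteq> c y" using P33_ne[OF c] .
  have c2: "c 2 = 3" using v[of 2] ne[of 0 2] ne[of 1 2] c01 by (auto simp: rc_def)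
  show ?thesis
  proof (cases "I33 c")
    case True
    have c3: "c 3 = 2" using True c01 unfolding I33_def by simp
    have c5: "c 5 = 1" using v[of 5] ne[of 2 5] ne[of 3 5] c2 c3 by (auto simp: rc_def)
    have c4: "c 4 = 3" using v[of 4] ne[of 3 4] ne[of 4 5] c3 c5 by (auto simp: rc_def)
    have c6: "c 6 = 3" using v[of 6] ne[of 0 6] ne[of 3 6] c01 c3 by (auto simp: rc_def)
    have c7: "c 7 = 1" using v[of 7] ne[of 1 7] ne[of 4 7] c01 c4 by (auto simp: rc_def)
    have c8: "c 8 = 2" using v[of 8] ne[of 2 8] ne[of 5 8] c2 c5 by (auto simp: rc_def)
    have "c = N1"
    proof
      fix x show "c x = N1 x"
      proof (cases "x < 9")
        case True then show ?thesis using nine[OF True] c01 c2 c3 c4 c5 c6 c7 c8 unfolding N1_def by auto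
      next
        case False then show ?thesis using P33_out[OF c False] unfolding N1_def by simp
      qed
    qed
    then show ?thesis using True by simp
  next
    case False
    have c3: "c 3 = 3" using v[of 3] ne[of 0 3] False c01 unfolding I33_def by (auto simp: rc_def)
    have c4: "c 4 = 1" using v[of 4] ne[of 3 4] ne[of 1 4] c3 c01 by (auto simp: rc_def)
    have c5: "c 5 = 2" using v[of 5] ne[of 3 5] ne[of 4 5] c3 c4 by (auto simp: rc_def)
    have c6: "c 6 = 2" using v[of 6] ne[of 0 6] ne[of 3 6] c01 c3 by (auto simp: rc_def)
    have c7: "c 7 = 3" using v[of 7] ne[of 1 7] ne[of 4 7] c01 c4 by (auto simp: rc_def)
    have c8: "c 8 = 1" using v[of 8] ne[of 2 8] ne[of 5 8] c2 c5 by (auto simp: rc_def)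
    have "c = N0"
    proof
      fix x show "c x = N0 x"
      proof (cases "x < 9")
        case True then show ?thesis using nine[OF True] c01 c2 c3 c4 c5 c6 c7 c8 unfolding N0_def by auto
      next
        case False then show ?thesis using P33_out[OF c False] unfolding N0_def by simp
      qed
    qed
    then show ?thesis using False by simp
  qed
qed

lemma normalize:
  assumes c: "c \<in> P33"
  shows "(c, if I33 c then N1 else N0) \<in> (kstep E33 ends33)\<^sup>*"
proof -
  define c1 where "c1 = (if c 0 = 1 then c else sw33 (c 0) 1 c)"
  have c1: "c1 \<in> P33" "c1 0 = 1" "I33 c1 = I33 c" "(c, c1) \<in> (kstep E33 ends33)\<^sup>*"
  proof -
    show "c1 \<in> P33" "c1 0 = 1" "I33 c1 = I33 c" unfolding c1_def
      using c sw33_P[OF c, of "c 0" 1] P33_val[OF c, of 0] sw33_0 sw33_I by auto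
    show "(c, c1) \<in> (kstep E33 ends33)\<^sup>*"
    proof (cases "c 0 = 1")
      case True then show ?thesis unfolding c1_def by simp
    next
      case False
      then have "(c, c1) \<in> kstep E33 ends33" unfolding c1_def using kstep33[OF c] P33_val[OF c, of 0] by auto
      then show ?thesis by simp
    qed
  qed
  define c2 where "c2 = (if c1 1 = 2 then c1 else sw33 (c1 1) 2 c1)"
  have c11: "c1 1 \<noteq> 1" using P33_ne[OF c1(1), of 0 1] c1(2) by (auto simp: rc_def)
  have c2: "c2 \<in> P33" "c2 0 = 1" "c2 1 = 2" "I33 c2 = I33 c" "(c1, c2) \<in> (kstep E33 ends33)\<^sup>*"
  proof -
    show "c2 \<in> P33" "c2 0 = 1" "c2 1 = 2" "I33 c2 = I33 c" unfolding c2_def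
      using sw33_P[OF c1(1), of "c1 1" 2] P33_val[OF c1(1), of 1] sw33_0 sw33_1 sw33_I c1 c11 by auto
    show "(c1, c2) \<in> (kstep E33 ends33)\<^sup>*"
    proof (cases "c1 1 = 2")
      case True then show ?thesis unfolding c2_def by simp
    next
      case False
      then have "(c1, c2) \<in> kstep E33 ends33" unfolding c2_def using kstep33[OF c1(1)] P33_val[OF c1(1), of 1] by auto
      then show ?thesis by simp
    qed
  qed
  have "c2 = (if I33 c then N1 else N0)" using uniq[OF c2(1-3)] c2(4) by simp
  then show ?thesis using c1(4) c2(5) by simp
qed

lemma sym33: "sym ((kstep E33 ends33)\<^sup>*)"
  by (rule sym_rtrancl) (auto simp: sym_def intro: kstep33_sym)

definition T33 where "T33 t = {d \<in> P33. I33 d = t}"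

lemma cls33: assumes c: "c \<in> P33" shows "(kstep E33 ends33)\<^sup>* `` {c} = T33 (I33 c)"
proof
  show "(kstep E33 ends33)\<^sup>* `` {c} \<subseteq> T33 (I33 c)"
  proof
    fix d assume "d \<in> (kstep E33 ends33)\<^sup>* `` {c}"
    then have "(c,d) \<in> (kstep E33 ends33)\<^sup>*" by simp
    then have "d \<in> P33 \<and> I33 d = I33 c"
    proof (induction rule: rtrancl_induct)
      case base then show ?case using c by simp
    next
      case (step y z)
      then obtain a b where "a \<in> {1,2,3}" "b \<in> {1,2,3}" "a \<noteq> b" "z = sw33 a b y"
        using kstep33 by blast
      then show ?case using step sw33_P sw33_I by auto
    qed
    then show "d \<in> T33 (I33 c)" unfolding T33_def by simp
  qed
  show "T33 (I33 c) \<subseteq> (kstep E33 ends33)\<^sup>* `` {c}"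
  proof
    fix d assume "d \<in> T33 (I33 c)"
    then have d: "d \<in> P33" "I33 d = I33 c" unfolding T33_def by auto
    have "(d, if I33 c then N1 else N0) \<in> (kstep E33 ends33)\<^sup>*" using normalize[OF d(1)] d(2) by simp
    then have "(if I33 c then N1 else N0, d) \<in> (kstep E33 ends33)\<^sup>*" using sym33 by (meson symD)
    then have "(c, d) \<in> (kstep E33 ends33)\<^sup>*" using normalize[OF c] by (meson rtrancl_trans)
    then show "d \<in> (kstep E33 ends33)\<^sup>* `` {c}" by simp
  qed
qed

lemma K33_classes: "kempe_classes_3 E33 ends33 = 2"
proof -
  have "P33 // (kstep E33 ends33)\<^sup>* = {T33 True, T33 False}"
  proof
    show "P33 // (kstep E33 ends33)\<^sup>* \<subseteq> {T33 True, T33 False}"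
    proof
      fix X assume "X \<in> P33 // (kstep E33 ends33)\<^sup>*"
      then obtain c where "c \<in> P33" "X = (kstep E33 ends33)\<^sup>* `` {c}" unfolding quotient_def by auto
      then have "X = T33 (I33 c)" using cls33 by simp
      then show "X \<in> {T33 True, T33 False}" by (cases "I33 c") auto
    qed
    have i1: "I33 N1" and i0: "\<not> I33 N0" unfolding I33_def N1_def N0_def by auto
    have "(kstep E33 ends33)\<^sup>* `` {N1} \<in> P33 // (kstep E33 ends33)\<^sup>*" by (rule quotientI[OF N1_P])
    then have "T33 True \<in> P33 // (kstep E33 ends33)\<^sup>*" using cls33[OF N1_P] i1 by simp
    moreover have "(kstep E33 ends33)\<^sup>* `` {N0} \<in> P33 // (kstep E33 ends33)\<^sup>*" by (rule quotientI[OF N0_P])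
    then have "T33 False \<in> P33 // (kstep E33 ends33)\<^sup>*" using cls33[OF N0_P] i0 by simp
    ultimately show "{T33 True, T33 False} \<subseteq> P33 // (kstep E33 ends33)\<^sup>*" by blast
  qed
  moreover have "T33 True \<noteq> T33 False"
  proof -
    have "N1 \<in> T33 True" "N1 \<notin> T33 False" using N1_P unfolding T33_def I33_def N1_def by auto
    then show ?thesis by blast
  qed
  ultimately show ?thesis unfolding kempe_classes_3_def kempe_equiv_kstep by simp
qed

lemma K33_graph: "graph V33 E33 ends33"
  unfolding graph_def V33_def E33_def ends33_def by auto

lemma deg33: "v < 6 \<Longrightarrow> {e \<in> E33. v \<in> ends33 e} = (if v < 3 then {3 * v, 3 * v + 1, 3 * v + 2} else {v - 3, v, v + 3})"
proof (rule set_eqI)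
  fix e assume v: "v < 6"
  show "(e \<in> {e \<in> E33. v \<in> ends33 e}) = (e \<in> (if v < 3 then {3 * v, 3 * v + 1, 3 * v + 2} else {v - 3, v, v + 3}))"
  proof (cases "e < 9")
    case True
    have "v = 0 \<or> v = 1 \<or> v = 2 \<or> v = 3 \<or> v = 4 \<or> v = 5" using v by arith
    then show ?thesis using nine[OF True] unfolding E33_def ends33_def
      by (elim disjE; simp; elim disjE; simp)
  next
    case False then show ?thesis using v unfolding E33_def by auto
  qed
qed

lemma K33_cubic: "cubic V33 E33 ends33"
  unfolding cubic_def
proof
  fix v assume "v \<in> V33"
  then have v: "v < 6" unfolding V33_def by simp
  have "card (if v < 3 then {3 * v, 3 * v + 1, 3 * v + 2} else {v - 3, v, v + 3}) = 3"
  proof (cases "v < 3")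
    case False
    then have "v - 3 \<noteq> v" "v - 3 \<noteq> v + 3" "v \<noteq> v + 3" by auto
    then show ?thesis using False by simp
  qed simp
  then show "degree E33 ends33 v = 3" unfolding degree_def deg33[OF v] .
qed

lemma K33_bip: "bipartite V33 E33 ends33"
  unfolding bipartite_def
proof (intro exI[of _ "{0,1,2}"] conjI ballI)
  show "{0,1,2} \<subseteq> V33" unfolding V33_def by auto
  fix e assume "e \<in> E33"
  then have "ends33 e \<inter> {0,1,2} = {e div 3}" unfolding E33_def ends33_def by auto
  then show "card (ends33 e \<inter> {0,1,2}) = 1" by simp
qed



lemma kempe_empty: "kempe_classes_3 ({} :: 'e set) ends = 1"
proof -
  have "proper_3_edge_colorings ({} :: 'e set) ends = {\<lambda>x. undefined}"
    unfolding proper_3_edge_colorings_def by simp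
  then show ?thesis unfolding kempe_classes_3_def quotient_def by simp
qed

lemma graph_empty: "graph ({} :: 'v set) ({} :: 'e set) ends" unfolding graph_def by simp
lemma cubic_empty: "cubic ({} :: 'v set) ({} :: 'e set) ends" unfolding cubic_def by simp
lemma bip_empty: "bipartite ({} :: 'v set) ({} :: 'e set) ends" unfolding bipartite_def by simp

lemma img_off: "(\<lambda>e. a + e) ` {..<(9::nat)} \<union> {..<a} = {..<a + 9}"
proof
  show "{..<a + 9} \<subseteq> (\<lambda>e. a + e) ` {..<(9::nat)} \<union> {..<a}"
  proof
    fix x assume "x \<in> {..<a+9}"
    then show "x \<in> (\<lambda>e. a + e) ` {..<(9::nat)} \<union> {..<a}"
      by (cases "x < a") (auto simp: image_iff intro!: bexI[of _ "x - a"])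
  qed
qed auto

lemma img_off6: "(\<lambda>e. a + e) ` {..<(6::nat)} \<union> {..<a} = {..<a + 6}"
proof
  show "{..<a + 6} \<subseteq> (\<lambda>e. a + e) ` {..<(6::nat)} \<union> {..<a}"
  proof
    fix x assume "x \<in> {..<a+6}"
    then show "x \<in> (\<lambda>e. a + e) ` {..<(6::nat)} \<union> {..<a}"
      by (cases "x < a") (auto simp: image_iff intro!: bexI[of _ "x - a"])
  qed
qed auto


theorem theorem23:
  fixes V :: "'v set" and E :: "'e set" and ends :: "'e \<Rightarrow> 'v set" and n :: nat
  assumes "simple_graph V E ends"
    and "cubic V E ends"
    and "\<not> planar V E ends"
    and "card V = n"
  shows "\<exists>(Vk :: nat \<Rightarrow> nat set) (Ek :: nat \<Rightarrow> nat set) (endsk :: nat \<Rightarrow> nat \<Rightarrow> nat set).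
           (\<forall>k\<ge>1. graph (Vk k) (Ek k) (endsk k) \<and> cubic (Vk k) (Ek k) (endsk k) \<and>
                   \<not> planar (Vk k) (Ek k) (endsk k) \<and> card (Vk k) = 6 * k + n \<and>
                   kempe_classes_3 (Ek k) (endsk k) = 2 ^ k * kempe_classes_3 E ends) \<and>
           (bipartite V E ends \<longrightarrow> (\<forall>k\<ge>1. bipartite (Vk k) (Ek k) (endsk k)))"
proof -
  have g: "graph V E ends" using assms(1) unfolding simple_graph_def by simp
  then have fin: "finite V" "finite E" unfolding graph_def by auto
  define m where "m = card E"
  obtain \<phi>0 where phi: "bij_betw \<phi>0 V {0..<n}" using ex_bij_betw_finite_nat[OF fin(1)] assms(4) by blast
  obtain \<psi>0 where psi: "bij_betw \<psi>0 E {0..<m}" using ex_bij_betw_finite_nat[OF fin(2)] m_def by blast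
  define endsN :: "nat \<Rightarrow> nat set" where
    "endsN x = (if x < m then \<phi>0 ` ends (inv_into E \<psi>0 x)
                else (\<lambda>u. n + 6 * ((x - m) div 9) + u) ` ends33 ((x - m) mod 9))" for x
  define Vk :: "nat \<Rightarrow> nat set" where "Vk k = {..<n + 6 * k}" for k
  define Ek :: "nat \<Rightarrow> nat set" where "Ek k = {..<m + 9 * k}" for k
  have claim: "graph (Vk k) (Ek k) endsN \<and> cubic (Vk k) (Ek k) endsN \<and> \<not> planar (Vk k) (Ek k) endsN \<and>
      kempe_classes_3 (Ek k) endsN = 2 ^ k * kempe_classes_3 E ends \<and>
      (bipartite V E ends \<longrightarrow> bipartite (Vk k) (Ek k) endsN)" for k
  proof (induction k)
    case 0
    interpret u: uni V E ends "{} :: nat set" "{} :: nat set" "\<lambda>_. {} :: nat set"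
      "Vk 0" "Ek 0" endsN \<psi>0 id \<phi>0 id
    proof
      show "graph V E ends" by (rule g)
      show "graph ({} :: nat set) ({} :: nat set) (\<lambda>_. {})" by (rule graph_empty)
      show "inj_on \<psi>0 E" using psi by (simp add: bij_betw_def)
      show "inj_on \<phi>0 V" using phi by (simp add: bij_betw_def)
      show "inj_on id ({} :: nat set)" by simp
      show "\<psi>0 ` E \<inter> id ` {} = {}" by simp
      show "\<phi>0 ` V \<inter> id ` {} = {}" by simp
      show "Ek 0 = \<psi>0 ` E \<union> id ` {}" using psi unfolding Ek_def bij_betw_def by auto
      show "Vk 0 = \<phi>0 ` V \<union> id ` {}" using phi unfolding Vk_def bij_betw_def by auto
      show "endsN (\<psi>0 e) = \<phi>0 ` ends e" if "e \<in> E" for e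
      proof -
        have "\<psi>0 e < m" using psi that unfolding bij_betw_def by auto
        moreover have "inv_into E \<psi>0 (\<psi>0 e) = e" using psi that unfolding bij_betw_def by simp
        ultimately show ?thesis unfolding endsN_def by simp
      qed
      show "endsN (id e) = id ` (\<lambda>_. {}) e" if "e \<in> ({} :: nat set)" for e using that by simp
    qed
    have "kempe_classes_3 (Ek 0) endsN = kempe_classes_3 E ends" using u.kempe_union kempe_empty[where 'e=nat and ends="\<lambda>_. {} :: nat set"] by simp
    moreover have "graph (Vk 0) (Ek 0) endsN" by (rule u.graph_union)
    moreover have "cubic (Vk 0) (Ek 0) endsN" by (rule u.cubic_union[OF assms(2) cubic_empty])
    moreover have "\<not> planar (Vk 0) (Ek 0) endsN" using u.planar_union assms(3) by blast
    moreover have "bipartite V E ends \<longrightarrow> bipartite (Vk 0) (Ek 0) endsN"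
      using u.bip_union bip_empty by blast
    ultimately show ?case by simp
  next
    case (Suc k)
    interpret u: uni "Vk k" "Ek k" endsN V33 E33 ends33 "Vk (Suc k)" "Ek (Suc k)" endsN
      id "\<lambda>e. m + 9 * k + e" id "\<lambda>u. n + 6 * k + u"
    proof
      show "graph (Vk k) (Ek k) endsN" using Suc.IH by simp
      show "graph V33 E33 ends33" by (rule K33_graph)
      show "inj_on id (Ek k)" "inj_on id (Vk k)" by simp_all
      show "inj_on (\<lambda>e. m + 9 * k + e) E33" "inj_on (\<lambda>u. n + 6 * k + u) V33" by (auto simp: inj_on_def)
      show "id ` Ek k \<inter> (\<lambda>e. m + 9 * k + e) ` E33 = {}" unfolding Ek_def by auto
      show "id ` Vk k \<inter> (\<lambda>u. n + 6 * k + u) ` V33 = {}" unfolding Vk_def by auto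
      show "Ek (Suc k) = id ` Ek k \<union> (\<lambda>e. m + 9 * k + e) ` E33"
        using img_off[of "m + 9 * k"] unfolding Ek_def E33_def by (auto simp: algebra_simps)
      show "Vk (Suc k) = id ` Vk k \<union> (\<lambda>u. n + 6 * k + u) ` V33"
        using img_off6[of "n + 6 * k"] unfolding Vk_def V33_def by (auto simp: algebra_simps)
      show "endsN (id e) = id ` endsN e" if "e \<in> Ek k" for e by simp
      show "endsN (m + 9 * k + e) = (\<lambda>u. n + 6 * k + u) ` ends33 e" if "e \<in> E33" for e
      proof -
        have e: "e < 9" using that unfolding E33_def by simp
        then have "(m + 9 * k + e - m) div 9 = k" "(m + 9 * k + e - m) mod 9 = e" by auto
        then show ?thesis unfolding endsN_def by simp
      qed
    qed
    have "kempe_classes_3 (Ek (Suc k)) endsN = 2 ^ Suc k * kempe_classes_3 E ends"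
      using u.kempe_union K33_classes Suc.IH by simp
    moreover have "graph (Vk (Suc k)) (Ek (Suc k)) endsN" by (rule u.graph_union)
    moreover have "cubic (Vk (Suc k)) (Ek (Suc k)) endsN" using u.cubic_union K33_cubic Suc.IH by blast
    moreover have "\<not> planar (Vk (Suc k)) (Ek (Suc k)) endsN" using u.planar_union Suc.IH by blast
    moreover have "bipartite V E ends \<longrightarrow> bipartite (Vk (Suc k)) (Ek (Suc k)) endsN"
      using u.bip_union K33_bip Suc.IH by blast
    ultimately show ?case by simp
  qed
  have cardV: "card (Vk k) = 6 * k + n" for k unfolding Vk_def by simp
  show ?thesis
    apply (rule exI[of _ Vk], rule exI[of _ Ek], rule exI[of _ "\<lambda>_. endsN"])
    using claim cardV by simp
qed


end
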